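(* Consider the continuous Bomber Problem described in the context, with parameter $v\in(0,1]$. Let $x=x_t>0$ be defined for small $t>0$ and satisfy $$\frac{|\log t|}{x_t}\to\rho\in(0,\infty)\quad\text{as } t\to 0.$$ Let $j\in\{1,2,\ldots\}$ be such that $$\binom{j+1}{2}^{-1}\le\rho<\binom{j}{2}^{-1},$$ with the convention $\binom{1}{2}^{-1}=\infty$. Then, as $t\to 0$, $$\frac{K(x_t,t)}{x_t}\to \frac1j+\frac{\rho(j-1)}{2},\qquad \frac{1}{x_t}\left|\log\big(1-H(x_t,t)\big)\right|\to \frac1j+\frac{\rho(j-1)}{2},$$ $$\frac{1}{x_t}\left|\log\big(1-P(x_t,t)\big)\right|\to \frac1j+\frac{\rho(j+1)}{2}.$$
   Context: The Bomber Problem: a bomber holding an amount $x\ge 0$ of (continuously divisible) ammunition must survive for a remaining time $t\ge 0$. Enemies arrive according to a time-homogeneous Poisson process of rate 1. Upon meeting an enemy, the bomber chooses an amount $y\in[0,x]$ of its current ammunition to fire; the enemy survives this with probability $e^{-y}$, and if it survives it destroys the bomber with probability $v\in(0,1]$. Thus the bomber survives an encounter in which it spends $y$ with probability $a(y)=1-ve^{-y}$, and continues with ammunition $x-y$. $P(x,t)$ denotes the optimal probability that the bomber survives for time $t$ starting with ammunition $x$; $H(x,t)$ denotes the optimal conditional probability of survival given that an enemy is encountered at remaining time $t$ while holding ammunition $x$; and $K(x,t)\in[0,x]$ denotes the optimal amount of ammunition to fire at that enemy, so that $H(x,t)=a(K(x,t))P(x-K(x,t),t)$. *)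

theory Defs
  imports "HOL-Analysis.Analysis"
begin

text \<open>Survival probability of one encounter when spending y.\<close>
definition bomber_a :: "real \<Rightarrow> real \<Rightarrow> real" where
  "bomber_a v y = 1 - v * exp (- y)"

text \<open>Optimal survival probability in the truncated game in which the bomber is
  safe after at most n further encounters (value iteration).  With remaining time t,
  no enemy arrives with probability exp(-t); the first enemy arrives at remaining
  time s with density exp(-(t-s)).\<close>
primrec bomber_Q :: "real \<Rightarrow> nat \<Rightarrow> real \<Rightarrow> real \<Rightarrow> real" where
  "bomber_Q v 0 x t = 1"
| "bomber_Q v (Suc n) x t =
     exp (- t) + integral {0..t}
       (\<lambda>s. exp (- (t - s)) * (SUP y\<in>{0..x}. bomber_a v y * bomber_Q v n (x - y) s))"

definition bomber_P :: "real \<Rightarrow> real \<Rightarrow> real \<Rightarrow> real" where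
  "bomber_P v x t = (INF n. bomber_Q v n x t)"

text \<open>Optimal conditional survival probability H(x,t) when meeting an enemy.\<close>
definition bomber_H :: "real \<Rightarrow> real \<Rightarrow> real \<Rightarrow> real" where
  "bomber_H v x t = (SUP y\<in>{0..x}. bomber_a v y * bomber_P v (x - y) t)"

end

theory Submission
  imports Defs "HOL-Analysis.Analysis"
begin


lemma exp_has_integral:
  fixes a b :: real
  assumes "a \<le> b"
  shows "(exp has_integral (exp b - exp a)) {a..b}"
proof (rule fundamental_theorem_of_calculus)
  fix x :: real
  have "(exp has_real_derivative exp x) (at x within {a..b})"
    using DERIV_exp has_field_derivative_at_within by blast
  then show "(exp has_vector_derivative exp x) (at x within {a..b})"
    by (simp add: has_real_derivative_iff_has_vector_derivative)
qed (use assms in auto)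

lemma exp_integral: "(a::real) \<le> b \<Longrightarrow> integral {a..b} exp = exp b - exp a"
  using exp_has_integral integral_unique by blast

lemma exp_integrable: "exp integrable_on {a..b::real}"
proof -
  have "continuous_on {a..b} (\<lambda>x::real. exp x)" by (intro continuous_intros)
  then have "(\<lambda>x::real. exp x) integrable_on {a..b}" by (rule integrable_continuous_interval)
  then show ?thesis by simp
qed

lemma sqrtpow_has_integral:
  assumes "0 \<le> t"
  shows "((\<lambda>s. sqrt s ^ k) has_integral (2 / (real k + 2) * sqrt t ^ (k+2))) {0..t}"
proof -
  let ?F = "\<lambda>s. 2 / (real k + 2) * sqrt s ^ (k+2)"
  have "((\<lambda>s. sqrt s ^ k) has_integral (?F t - ?F 0)) {0..t}"
  proof (rule fundamental_theorem_of_calculus_interior)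
    show "continuous_on {0..t} ?F" by (intro continuous_intros)
    fix x assume x: "x \<in> {0<..<t}"
    then have x0: "x > 0" by simp
    have d1: "(sqrt has_real_derivative inverse (sqrt x) / 2) (at x)"
      using x0 by (rule DERIV_real_sqrt)
    have d2: "((\<lambda>s. sqrt s ^ (k+2)) has_real_derivative real (k+2) * sqrt x ^ (k+2 - Suc 0) * (inverse (sqrt x) / 2)) (at x)"
      using DERIV_chain2[OF DERIV_pow d1] .
    have d3: "(?F has_real_derivative 2 / (real k + 2) * (real (k+2) * sqrt x ^ (k+2 - Suc 0) * (inverse (sqrt x) / 2))) (at x)"
      by (rule DERIV_cmult[OF d2])
    have sx: "sqrt x > 0" using x0 by simp
    have "2 / (real k + 2) * (real (k+2) * sqrt x ^ (k+2 - Suc 0) * (inverse (sqrt x) / 2)) = sqrt x ^ k"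
    proof -
      have e1: "sqrt x ^ (k+2 - Suc 0) * inverse (sqrt x) = sqrt x ^ k" using sx by (simp add: field_simps)
      have gen: "\<And>c d A B::real. c * (d * A * (B/2)) = (c*d/2)*(A*B)" by (simp add: field_simps)
      have e2: "2 / (real k + 2) * real (k+2) / 2 = 1" by (simp add: field_simps)
      have "2 / (real k + 2) * (real (k+2) * sqrt x ^ (k+2 - Suc 0) * (inverse (sqrt x) / 2))
          = (2 / (real k + 2) * real (k+2) / 2) * (sqrt x ^ (k+2 - Suc 0) * inverse (sqrt x))"
        using gen by blast
      then show ?thesis by (simp only: e1 e2 mult_1_left)
    qed
    with d3 show "(?F has_vector_derivative sqrt x ^ k) (at x)"
      by (simp add: has_real_derivative_iff_has_vector_derivative[symmetric])
  qed (use assms in auto)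
  then show ?thesis by simp
qed



definition bG :: "real \<Rightarrow> nat \<Rightarrow> real \<Rightarrow> real \<Rightarrow> real" where
  "bG v n z s = (SUP y\<in>{0..z}. bomber_a v y * bomber_Q v n (z - y) s)"

lemma Q_Suc': "bomber_Q v (Suc n) z t = exp (-t) + exp (-t) * integral {0..t} (\<lambda>s. exp s * bG v n z s)"
proof -
  have "(\<lambda>s. exp (- (t - s)) * bG v n z s) = (\<lambda>s. exp (-t) * (exp s * bG v n z s))"
    by (auto simp: exp_diff exp_minus field_simps)
  then show ?thesis
    by (simp add: bG_def[symmetric])
qed

context
  fixes v :: real
  assumes v: "0 < v" "v \<le> 1"
begin

lemma a_bounds: "0 \<le> y \<Longrightarrow> 0 \<le> bomber_a v y \<and> bomber_a v y \<le> 1"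
proof -
  assume y: "0 \<le> y"
  have "exp (-y) \<le> 1" using y by simp
  then have "v * exp (-y) \<le> 1" using v by (metis mult_le_one exp_ge_zero less_imp_le)
  moreover have "v * exp (-y) > 0" using v by simp
  ultimately show ?thesis by (simp add: bomber_a_def)
qed

lemma a_mono: "y \<le> y' \<Longrightarrow> bomber_a v y \<le> bomber_a v y'"
  using v by (simp add: bomber_a_def)

lemma G_props:
  assumes b: "\<forall>z t. 0 \<le> z \<longrightarrow> 0 \<le> t \<longrightarrow> 0 \<le> bomber_Q v n z t \<and> bomber_Q v n z t \<le> 1"
    and m: "\<forall>z t t'. 0 \<le> z \<longrightarrow> 0 \<le> t \<longrightarrow> t \<le> t' \<longrightarrow> bomber_Q v n z t' \<le> bomber_Q v n z t"
    and z: "0 \<le> z"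
  shows "\<And>s. 0 \<le> s \<Longrightarrow> 0 \<le> bG v n z s \<and> bG v n z s \<le> 1"
    and "\<And>s s'. 0 \<le> s \<Longrightarrow> s \<le> s' \<Longrightarrow> bG v n z s' \<le> bG v n z s"
    and "\<And>t. (\<lambda>s. exp s * bG v n z s) integrable_on {0..t}"
    and "\<And>s y. 0 \<le> s \<Longrightarrow> y \<in> {0..z} \<Longrightarrow> bomber_a v y * bomber_Q v n (z - y) s \<le> bG v n z s"
proof -
  have ne: "{0..z} \<noteq> {}" using z by simp
  have tb: "0 \<le> bomber_a v y * bomber_Q v n (z - y) s \<and> bomber_a v y * bomber_Q v n (z - y) s \<le> 1"
    if "y \<in> {0..z}" "0 \<le> s" for y s
  proof -
    have "0 \<le> bomber_a v y" "bomber_a v y \<le> 1" using a_bounds that by auto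
    moreover have "0 \<le> bomber_Q v n (z - y) s" "bomber_Q v n (z - y) s \<le> 1" using b that by auto
    ultimately show ?thesis by (simp add: mult_le_one)
  qed
  have bdd: "bdd_above ((\<lambda>y. bomber_a v y * bomber_Q v n (z - y) s) ` {0..z})" if "0 \<le> s" for s
    using tb that by (intro bdd_aboveI2[of _ _ 1]) auto
  show up: "\<And>s y. 0 \<le> s \<Longrightarrow> y \<in> {0..z} \<Longrightarrow> bomber_a v y * bomber_Q v n (z - y) s \<le> bG v n z s"
    unfolding bG_def using bdd by (intro cSUP_upper) auto
  show bnd: "0 \<le> bG v n z s \<and> bG v n z s \<le> 1" if s: "0 \<le> s" for s
  proof
    show "0 \<le> bG v n z s" using up[OF s, of 0] tb[of 0 s] z s by auto
    show "bG v n z s \<le> 1" unfolding bG_def using tb s ne by (intro cSUP_least) auto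
  qed
  show mono: "bG v n z s' \<le> bG v n z s" if "0 \<le> s" "s \<le> s'" for s s'
    unfolding bG_def
  proof (rule cSUP_mono[OF ne bdd[OF that(1)]])
    fix y assume y: "y \<in> {0..z}"
    have "bomber_Q v n (z - y) s' \<le> bomber_Q v n (z - y) s" using m y that by auto
    moreover have "0 \<le> bomber_a v y" using a_bounds y by auto
    ultimately show "\<exists>m\<in>{0..z}. bomber_a v y * bomber_Q v n (z - y) s' \<le> bomber_a v m * bomber_Q v n (z - m) s"
      using y by (intro bexI[of _ y]) (auto intro: mult_left_mono)
  qed
  show "(\<lambda>s. exp s * bG v n z s) integrable_on {0..t}" for t
  proof -
    have "mono_on {0..t} (\<lambda>s. exp s * (1 - bG v n z s))"
    proof (rule mono_onI)
      fix s s' assume ss: "s \<in> {0..t}" "s' \<in> {0..t}" "s \<le> s'"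
      have "1 - bG v n z s \<le> 1 - bG v n z s'" using mono ss by auto
      moreover have "0 \<le> 1 - bG v n z s" using bnd ss by auto
      ultimately show "exp s * (1 - bG v n z s) \<le> exp s' * (1 - bG v n z s')"
        using ss by (intro mult_mono) auto
    qed
    then have i1: "(\<lambda>s. exp s * (1 - bG v n z s)) integrable_on {0..t}"
      by (rule integrable_on_mono_on)
    have "(\<lambda>s. exp s - exp s * (1 - bG v n z s)) integrable_on {0..t}"
      using integrable_diff[OF exp_integrable i1] by simp
    then show ?thesis by (simp add: algebra_simps)
  qed
qed

lemma Q_props:
  "(\<forall>z t. 0 \<le> z \<longrightarrow> 0 \<le> t \<longrightarrow> 0 \<le> bomber_Q v n z t \<and> bomber_Q v n z t \<le> 1) \<and>
   (\<forall>z t t'. 0 \<le> z \<longrightarrow> 0 \<le> t \<longrightarrow> t \<le> t' \<longrightarrow> bomber_Q v n z t' \<le> bomber_Q v n z t)"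
proof (induction n)
  case 0
  then show ?case by simp
next
  case (Suc n)
  note b = Suc[THEN conjunct1] and m = Suc[THEN conjunct2]
  define J where "J z t = integral {0..t} (\<lambda>s. exp s * bG v n z s)" for z t
  have QJ: "bomber_Q v (Suc n) z t = exp (-t) * (1 + J z t)" for z t
    using Q_Suc'[of v n z t] unfolding J_def by (simp only: distrib_left mult_1_right)
  have Jb: "0 \<le> J z t \<and> J z t \<le> exp t - 1" if "0 \<le> z" "0 \<le> t" for z t
  proof
    note G = G_props[OF b m that(1)]
    show "0 \<le> J z t" unfolding J_def
      using G(1) by (intro integral_nonneg G(3)) auto
    have "J z t \<le> integral {0..t} exp" unfolding J_def
      using G(1) by (intro integral_le G(3) exp_integrable) (auto intro: mult_right_le_one_le)
    then show "J z t \<le> exp t - 1" using exp_integral[OF that(2)] by simp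
  qed
  show ?case
  proof (intro conjI allI impI)
    fix z t :: real assume zt: "0 \<le> z" "0 \<le> t"
    show "0 \<le> bomber_Q v (Suc n) z t" using QJ Jb[OF zt] by simp
    have "exp (-t) * (1 + J z t) \<le> exp (-t) * exp t"
      using Jb[OF zt] by (intro mult_left_mono) auto
    then show "bomber_Q v (Suc n) z t \<le> 1" using QJ by (simp add: exp_minus)
  next
    fix z t t' :: real assume zt: "0 \<le> z" "0 \<le> t" "t \<le> t'"
    note G = G_props[OF b m zt(1)]
    define g where "g = bG v n z t"
    have g: "0 \<le> g" "g \<le> 1" using G(1) zt g_def by auto
    have int': "(\<lambda>s. exp s * bG v n z s) integrable_on {0..t'}" by (rule G(3))
    have split: "J z t' = J z t + integral {t..t'} (\<lambda>s. exp s * bG v n z s)"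
      unfolding J_def using Henstock_Kurzweil_Integration.integral_combine[OF zt(2) zt(3) int'] by simp
    have "integral {t..t'} (\<lambda>s. exp s * bG v n z s) \<le> integral {t..t'} (\<lambda>s. exp s * g)"
    proof (rule integral_le)
      show "(\<lambda>s. exp s * bG v n z s) integrable_on {t..t'}"
        using zt by (intro integrable_on_subinterval[OF int']) auto
      show "(\<lambda>s. exp s * g) integrable_on {t..t'}"
        using integrable_on_mult_left[OF exp_integrable, of g] by (simp add: mult.commute)
      fix s assume "s \<in> {t..t'}"
      then show "exp s * bG v n z s \<le> exp s * g" unfolding g_def
        using G(2) zt by (intro mult_left_mono) auto
    qed
    also have "\<dots> = (exp t' - exp t) * g"
      using integral_mult_left[of "{t..t'}" exp g] exp_integral[OF zt(3)] by simp
    finally have up: "J z t' \<le> J z t + (exp t' - exp t) * g" using split by simp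
    have "J z t \<ge> integral {0..t} (\<lambda>s. exp s * g)"
      unfolding J_def
    proof (rule integral_le)
      show "(\<lambda>s. exp s * g) integrable_on {0..t}"
        using integrable_on_mult_left[OF exp_integrable, of g] by (simp add: mult.commute)
      show "(\<lambda>s. exp s * bG v n z s) integrable_on {0..t}" by (rule G(3))
      fix s assume "s \<in> {0..t}"
      then show "exp s * g \<le> exp s * bG v n z s" unfolding g_def
        using G(2) zt by (intro mult_left_mono) auto
    qed
    also have "integral {0..t} (\<lambda>s. exp s * g) = (exp t - 1) * g"
      using integral_mult_left[of "{0..t}" exp g] exp_integral[OF zt(2)] by simp
    finally have lo: "(exp t - 1) * g \<le> J z t" .
    have "exp t \<le> exp t'" using zt by simp
    have key: "1 + J z t' \<le> exp (t' - t) * (1 + J z t)"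
    proof -
      have E: "exp (t' - t) * exp t = exp t'" by (simp add: exp_diff)
      have E1: "1 \<le> exp (t' - t)" using zt by simp
      have "1 + J z t' \<le> 1 + J z t + (exp t' - exp t) * g" using up by simp
      also have "\<dots> = 1 + J z t + (exp (t'-t) - 1) * (exp t * g)" using E by (simp add: algebra_simps)
      also have "\<dots> \<le> 1 + J z t + (exp (t'-t) - 1) * (1 + J z t)"
      proof -
        have "exp t * g \<le> 1 + J z t" using lo g by (simp add: algebra_simps)
        then show ?thesis using E1 by (simp add: mult_left_mono)
      qed
      also have "\<dots> = exp (t' - t) * (1 + J z t)" by (simp add: algebra_simps)
      finally show ?thesis .
    qed
    have "bomber_Q v (Suc n) z t' = exp (-t') * (1 + J z t')" by (rule QJ)
    also have "\<dots> \<le> exp (-t') * (exp (t' - t) * (1 + J z t))"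
      using key by (intro mult_left_mono) auto
    also have "\<dots> = exp (-t) * (1 + J z t)" by (simp add: exp_diff exp_minus field_simps)
    finally show "bomber_Q v (Suc n) z t' \<le> bomber_Q v (Suc n) z t" using QJ by simp
  qed
qed

end


lemma ident: "A * (lv - y) + (1 - A) * (lc + (-s - (z - y) * B) + (M + 2) * l)
   - ((lv + (M + 1) * lc) * A + (-s - z * A) + (M + 1) * l) = s * A"
  if "(A::real) * (M + 2) = 1" "B * (M+1) = 1"
  using that by algebra

lemma sqrtpow_exp: "0 < s \<Longrightarrow> sqrt s ^ n = exp (real n * ln (sqrt s))"
  by (simp add: exp_of_nat_mult)

context
  fixes v :: real
  assumes v: "0 < v" "v \<le> 1"
begin

lemma aR_bounds:
  assumes "0 \<le> y" "0 \<le> R" "R \<le> 1"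
  shows "v * exp (-y) \<le> 1 - bomber_a v y * R" "1 - R \<le> 1 - bomber_a v y * R"
    "1 - bomber_a v y * R \<le> v * exp (-y) + (1 - R)" "0 \<le> 1 - bomber_a v y * R"
proof -
  have a: "0 \<le> bomber_a v y" "bomber_a v y \<le> 1" using a_bounds[OF v assms(1)] by auto
  have e: "1 - bomber_a v y = v * exp (-y)" by (simp add: bomber_a_def)
  have "bomber_a v y * R \<le> bomber_a v y" using a assms by (simp add: mult_right_le_one_le)
  then show "v * exp (-y) \<le> 1 - bomber_a v y * R" using e by linarith
  have "bomber_a v y * R \<le> 1 * R" using a assms by (intro mult_right_mono) auto
  then show "1 - R \<le> 1 - bomber_a v y * R" by linarith
  have "0 \<le> (1 - bomber_a v y) * (1 - R)" using a assms by simp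
  moreover have "(1 - bomber_a v y) * (1 - R) = 1 - bomber_a v y - R + bomber_a v y * R" by (simp add: algebra_simps)
  ultimately show "1 - bomber_a v y * R \<le> v * exp (-y) + (1 - R)" using e by linarith
  have "bomber_a v y * R \<le> 1" using a assms by (simp add: mult_le_one)
  then show "0 \<le> 1 - bomber_a v y * R" by simp
qed

lemma gm:
  assumes c: "0 < c" and s: "0 \<le> s" and y: "0 \<le> y" and R: "0 \<le> R" "R \<le> 1"
    and hyp: "c * exp (-s - (z - y) / (real m + 1)) * sqrt s ^ (m+2) \<le> 1 - R"
  shows "exp ((ln v + (real m + 1) * ln c) / (real m + 2)) * exp (-s - z / (real m + 2)) * sqrt s ^ (m+1)
         \<le> 1 - bomber_a v y * R"
proof (cases "s = 0")
  case True
  then show ?thesis using aR_bounds[OF y R] by simp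
next
  case False
  then have s0: "0 < s" using s by simp
  define l where "l = ln (sqrt s)"
  define lA where "lA = ln v - y"
  define lB where "lB = ln c + (-s - (z - y) / (real m + 1)) + (real m + 2) * l"
  define \<theta> where "\<theta> = 1 / (real m + 2)"
  have A: "v * exp (-y) = exp lA" using v by (simp add: lA_def exp_diff exp_minus field_simps)
  have B: "c * exp (-s - (z - y) / (real m + 1)) * sqrt s ^ (m+2) = exp lB"
  proof -
    have "sqrt s ^ (m+2) = exp ((real m + 2) * l)" using sqrtpow_exp[OF s0, of "m+2"] by (simp add: l_def)
    then show ?thesis unfolding lB_def exp_add using c by simp
  qed
  have LHS: "exp ((ln v + (real m + 1) * ln c) / (real m + 2)) * exp (-s - z / (real m + 2)) * sqrt s ^ (m+1)
      = exp ((ln v + (real m + 1) * ln c) / (real m + 2) + (-s - z / (real m + 2)) + (real m + 1) * l)"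
  proof -
    have "sqrt s ^ (m+1) = exp ((real m + 1) * l)" using sqrtpow_exp[OF s0, of "m+1"] by (simp add: l_def)
    then show ?thesis unfolding exp_add by simp
  qed
  have ex: "(ln v + (real m + 1) * ln c) / (real m + 2) + (-s - z / (real m + 2)) + (real m + 1) * l
      \<le> \<theta> * lA + (1 - \<theta>) * lB"
  proof -
    have "\<theta> * lA + (1 - \<theta>) * lB - ((ln v + (real m + 1) * ln c) / (real m + 2) + (-s - z / (real m + 2)) + (real m + 1) * l)
        = s / (real m + 2)"
    proof -
      have h1: "(1 / (real m + 2)) * (real m + 2) = 1" "(1 / (real m + 1)) * (real m + 1) = 1" by auto
      have "\<theta> * lA + (1 - \<theta>) * lB - ((ln v + (real m + 1) * ln c) * (1 / (real m + 2)) + (-s - z * (1 / (real m + 2))) + (real m + 1) * l)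
        = s * (1 / (real m + 2))"
        unfolding \<theta>_def lA_def lB_def using ident[OF h1] by (simp add: divide_inverse)
      then show ?thesis by (simp add: divide_inverse)
    qed
    moreover have "s / (real m + 2) \<ge> 0" using s by simp
    ultimately show ?thesis by linarith
  qed
  have th: "0 \<le> \<theta>" "\<theta> \<le> 1" unfolding \<theta>_def by auto
  have "\<theta> * lA + (1 - \<theta>) * lB \<le> max lA lB"
  proof -
    have "\<theta> * lA \<le> \<theta> * max lA lB" using th by (simp add: mult_left_mono)
    moreover have "(1-\<theta>) * lB \<le> (1-\<theta>) * max lA lB" using th by (simp add: mult_left_mono)
    ultimately show ?thesis by (simp add: algebra_simps)
  qed
  then have "exp (\<theta> * lA + (1 - \<theta>) * lB) \<le> exp (max lA lB)" by simp
  also have "exp (max lA lB) = max (exp lA) (exp lB)" by (simp add: max_def)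
  also have "\<dots> \<le> 1 - bomber_a v y * R"
    using aR_bounds[OF y R] hyp A B by simp
  finally show ?thesis using LHS ex by (smt (verit) exp_le_cancel_iff)
qed

end


context
  fixes v :: real
  assumes v: "0 < v" "v \<le> 1"
begin

lemma Gp:
  assumes "0 \<le> z"
  shows "\<And>s. 0 \<le> s \<Longrightarrow> 0 \<le> bG v n z s \<and> bG v n z s \<le> 1"
    and "\<And>s s'. 0 \<le> s \<Longrightarrow> s \<le> s' \<Longrightarrow> bG v n z s' \<le> bG v n z s"
    and "\<And>t. (\<lambda>s. exp s * bG v n z s) integrable_on {0..t}"
    and "\<And>s y. 0 \<le> s \<Longrightarrow> y \<in> {0..z} \<Longrightarrow> bomber_a v y * bomber_Q v n (z - y) s \<le> bG v n z s"
  using G_props[OF v Q_props[OF v, THEN conjunct1] Q_props[OF v, THEN conjunct2] assms] by auto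

lemma Qb: "0 \<le> z \<Longrightarrow> 0 \<le> t \<Longrightarrow> 0 \<le> bomber_Q v n z t \<and> bomber_Q v n z t \<le> 1"
  using Q_props[OF v] by blast

lemma one_minus_Q_Suc:
  assumes z: "0 \<le> z" and t: "0 \<le> t"
  shows "1 - bomber_Q v (Suc n) z t = exp (-t) * integral {0..t} (\<lambda>s. exp s * (1 - bG v n z s))"
proof -
  have i: "(\<lambda>s. exp s * bG v n z s) integrable_on {0..t}" by (rule Gp(3)[OF z])
  have "integral {0..t} (\<lambda>s. exp s * (1 - bG v n z s)) = integral {0..t} (\<lambda>s. exp s - exp s * bG v n z s)"
    by (simp add: algebra_simps)
  also have "\<dots> = integral {0..t} exp - integral {0..t} (\<lambda>s. exp s * bG v n z s)"
    using integral_diff[OF exp_integrable i] by simp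
  also have "\<dots> = exp t - 1 - integral {0..t} (\<lambda>s. exp s * bG v n z s)"
    using exp_integral[OF t] by simp
  finally have e: "integral {0..t} (\<lambda>s. exp s * (1 - bG v n z s)) = exp t - 1 - integral {0..t} (\<lambda>s. exp s * bG v n z s)" .
  show ?thesis unfolding e Q_Suc' by (simp add: algebra_simps exp_minus field_simps)
qed

lemma int1m:
  assumes z: "0 \<le> z"
  shows "(\<lambda>s. exp s * (1 - bG v n z s)) integrable_on {0..t}"
proof -
  have "(\<lambda>s. exp s - exp s * bG v n z s) integrable_on {0..t}"
    using integrable_diff[OF exp_integrable Gp(3)[OF z]] by simp
  then show ?thesis by (simp add: algebra_simps)
qed

lemma Q_Suc_lower:
  assumes z: "0 \<le> z" and t: "0 \<le> t" and b: "\<And>s. s \<in> {0..t} \<Longrightarrow> b s \<le> 1 - bG v n z s"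
    and bi: "(\<lambda>s. exp s * b s) integrable_on {0..t}"
  shows "exp (-t) * integral {0..t} (\<lambda>s. exp s * b s) \<le> 1 - bomber_Q v (Suc n) z t"
proof -
  have "integral {0..t} (\<lambda>s. exp s * b s) \<le> integral {0..t} (\<lambda>s. exp s * (1 - bG v n z s))"
    using b by (intro integral_le bi int1m z) (auto intro: mult_left_mono)
  then show ?thesis unfolding one_minus_Q_Suc[OF z t] by (intro mult_left_mono) auto
qed

lemma Q_Suc_upper:
  assumes z: "0 \<le> z" and t: "0 \<le> t" and b: "\<And>s. s \<in> {0..t} \<Longrightarrow> 1 - bG v n z s \<le> b s"
    and bi: "b integrable_on {0..t}"
  shows "1 - bomber_Q v (Suc n) z t \<le> integral {0..t} b"
proof -
  have "integral {0..t} (\<lambda>s. exp s * (1 - bG v n z s)) \<le> integral {0..t} (\<lambda>s. exp t * b s)"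
  proof (intro integral_le int1m z)
    show "(\<lambda>s. exp t * b s) integrable_on {0..t}" using bi by simp
    fix s assume s: "s \<in> {0..t}"
    have g: "0 \<le> 1 - bG v n z s" using Gp(1)[OF z, of s] s by auto
    show "exp s * (1 - bG v n z s) \<le> exp t * b s"
      using s g b[OF s] by (intro mult_mono) auto
  qed
  also have "\<dots> = exp t * integral {0..t} b" by simp
  finally show ?thesis unfolding one_minus_Q_Suc[OF z t]
    by (simp add: exp_minus field_simps)
qed

lemma Q_lower:
  "\<exists>c>0. \<forall>z t. 0 \<le> z \<longrightarrow> 0 \<le> t \<longrightarrow>
     c * exp (-t - z / (real m + 1)) * sqrt t ^ (m+2) \<le> 1 - bomber_Q v (Suc m) z t"
proof (induction m)
  case 0
  show ?case
  proof (intro exI[of _ v] conjI allI impI)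
    show "0 < v" using v by simp
    fix z t :: real assume zt: "0 \<le> z" "0 \<le> t"
    have G0: "bG v 0 z s \<le> bomber_a v z" for s
      unfolding bG_def using zt by (intro cSUP_least) (auto intro: a_mono[OF v])
    have "exp (-t) * integral {0..t} (\<lambda>s. exp s * (v * exp (-z))) \<le> 1 - bomber_Q v (Suc 0) z t"
    proof (rule Q_Suc_lower[OF zt])
      fix s show "v * exp (-z) \<le> 1 - bG v 0 z s" using G0[of s] by (simp add: bomber_a_def)
    next
      show "(\<lambda>s. exp s * (v * exp (-z))) integrable_on {0..t}"
        using integrable_on_mult_left[OF exp_integrable, of "v * exp (-z)"] by (simp add: mult.commute)
    qed
    moreover have "integral {0..t} (\<lambda>s. exp s * (v * exp (-z))) = (exp t - 1) * (v * exp (-z))"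
      using integral_mult_left[of "{0..t}" exp "v * exp (-z)"] exp_integral[OF zt(2)] by simp
    moreover have "t \<le> exp t - 1" using exp_ge_add_one_self[of t] by linarith
    ultimately have "exp (-t) * (t * (v * exp (-z))) \<le> 1 - bomber_Q v (Suc 0) z t"
      by (smt (verit) exp_gt_zero mult_left_mono mult_right_mono v(1) zt(2) mult_pos_pos)
    moreover have "sqrt t ^ 2 = t" using zt by simp
    ultimately show "v * exp (-t - z / (real 0 + 1)) * sqrt t ^ (0+2) \<le> 1 - bomber_Q v (Suc 0) z t"
      by (simp add: exp_diff exp_minus field_simps)
  qed
next
  case (Suc m)
  then obtain c where c: "c > 0" and
    hc: "\<And>z t. 0 \<le> z \<Longrightarrow> 0 \<le> t \<Longrightarrow> c * exp (-t - z / (real m + 1)) * sqrt t ^ (m+2) \<le> 1 - bomber_Q v (Suc m) z t"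
    by blast
  define C where "C = exp ((ln v + (real m + 1) * ln c) / (real m + 2))"
  have C0: "C > 0" unfolding C_def by simp
  show ?case
  proof (intro exI[of _ "C * 2 / (real m + 3)"] conjI allI impI)
    show "0 < C * 2 / (real m + 3)" using C0 by simp
    fix z t :: real assume zt: "0 \<le> z" "0 \<le> t"
    define b where "b s = C * exp (-s - z / (real m + 2)) * sqrt s ^ (m+1)" for s
    have bb: "b s \<le> 1 - bG v (Suc m) z s" if s: "s \<in> {0..t}" for s
    proof -
      have "bG v (Suc m) z s \<le> 1 - b s"
        unfolding bG_def
      proof (rule cSUP_least)
        show "{0..z} \<noteq> {}" using zt by simp
        fix y assume y: "y \<in> {0..z}"
        have R: "0 \<le> bomber_Q v (Suc m) (z - y) s" "bomber_Q v (Suc m) (z - y) s \<le> 1"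
          using Qb[of "z-y" s, where n="Suc m"] y s by (auto simp del: bomber_Q.simps)
        have "b s \<le> 1 - bomber_a v y * bomber_Q v (Suc m) (z - y) s"
          unfolding b_def C_def
          using gm[OF v c _ _ R hc[of "z-y" s]] y s by (auto simp del: bomber_Q.simps)
        then show "bomber_a v y * bomber_Q v (Suc m) (z - y) s \<le> 1 - b s" by simp
      qed
      then show ?thesis by simp
    qed
    have eb: "(\<lambda>s. exp s * b s) = (\<lambda>s. (C * exp (- z / (real m + 2))) * sqrt s ^ (m+1))"
    proof (rule ext)
      fix s
      have e: "exp s * exp (-s - z / (real m + 2)) = exp (- z / (real m + 2))" by (simp add: exp_add[symmetric])
      have "exp s * b s = C * (exp s * exp (-s - z / (real m + 2))) * sqrt s ^ (m+1)"
        unfolding b_def by (simp add: ac_simps)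
      then show "exp s * b s = (C * exp (- z / (real m + 2))) * sqrt s ^ (m+1)" unfolding e .
    qed
    have hi: "((\<lambda>s. exp s * b s) has_integral (C * exp (- z / (real m + 2))) * (2 / (real (m+1) + 2) * sqrt t ^ (m+1+2))) {0..t}"
      unfolding eb using has_integral_mult_right[OF sqrtpow_has_integral[OF zt(2), of "m+1"]] by simp
    have "exp (-t) * integral {0..t} (\<lambda>s. exp s * b s) \<le> 1 - bomber_Q v (Suc (Suc m)) z t"
      using Q_Suc_lower[OF zt bb] hi by blast
    moreover have "integral {0..t} (\<lambda>s. exp s * b s) = (C * exp (- z / (real m + 2))) * (2 / (real (m+1) + 2) * sqrt t ^ (m+1+2))"
      using hi by (rule integral_unique)
    moreover have "C * 2 / (real m + 3) * exp (- t - z / (real (Suc m) + 1)) * sqrt t ^ (Suc m + 2)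
       = exp (-t) * ((C * exp (- z / (real m + 2))) * (2 / (real (m+1) + 2) * sqrt t ^ (m+1+2)))"
    proof -
      have "exp (- t - z / (real (Suc m) + 1)) = exp (-t) * exp (- z / (real m + 2))"
        by (simp add: exp_add[symmetric] add.commute)
      moreover have "real (m+1) + 2 = real m + 3" by simp
      moreover have "Suc m + 2 = m+1+2" by simp
      ultimately show ?thesis by (simp only:) (simp add: field_simps)
    qed
    ultimately show "C * 2 / (real m + 3) * exp (- t - z / (real (Suc m) + 1)) * sqrt t ^ (Suc m + 2) \<le> 1 - bomber_Q v (Suc (Suc m)) z t"
      by (simp only:)
  qed
qed

end


definition UB :: "nat \<Rightarrow> real \<Rightarrow> real \<Rightarrow> real" where
  "UB N z t = (\<Sum>k<N. 2 * exp (- z / (real k + 1)) * sqrt t ^ (k+2)) + 4 * sqrt t ^ (N+2)"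

definition WB :: "real \<Rightarrow> nat \<Rightarrow> real \<Rightarrow> real \<Rightarrow> real" where
  "WB v N z s = v * exp (-z) + (\<Sum>k<N. (v + 2) * exp (- z / (real k + 2)) * sqrt s ^ (k+1)) + 4 * sqrt s ^ (N+2)"

lemma UB_nonneg: "0 \<le> t \<Longrightarrow> 0 \<le> UB N z t"
  unfolding UB_def by (intro add_nonneg_nonneg sum_nonneg) auto

lemma ident2: "(z + p * l - z * B) * A = l + z * B" if "(A::real) * p = 1" "B * (p + 1) = 1"
  using that by algebra

lemma term_le:
  assumes s: "0 \<le> s" and E: "0 < E" "sqrt s ^ (k+1) * exp (- z / (real k + 2)) \<le> E"
  shows "exp (- (z - (- ln E)) / (real k + 1)) * sqrt s ^ (k+2) \<le> exp (- z / (real k + 2)) * sqrt s ^ (k+1)"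
proof (cases "s = 0")
  case True then show ?thesis by simp
next
  case False
  then have s0: "0 < s" using s by simp
  define l where "l = ln (sqrt s)"
  define p where "p = real k + 1"
  have p: "p > 0" unfolding p_def by simp
  have pw: "sqrt s ^ n = exp (real n * l)" for n using sqrtpow_exp[OF s0] l_def by simp
  have "ln (sqrt s ^ (k+1) * exp (- z / (real k + 2))) \<le> ln E"
    using E s0 by (subst ln_le_cancel_iff) auto
  then have h: "p * l - z * (1 / (p+1)) \<le> ln E"
    using s0 by (simp add: ln_mult pw p_def ln_realpow l_def[symmetric] algebra_simps)
  have "(z + p * l - z * (1/(p+1))) * (1/p) \<le> (z + ln E) * (1/p)"
    using h p by (intro mult_right_mono) auto
  moreover have "(z + p * l - z * (1/(p+1))) * (1/p) = l + z * (1/(p+1))"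
    using p by (intro ident2) auto
  ultimately have key: "(p + 1) * l - (z + ln E) * (1/p) \<le> p * l - z * (1/(p+1))"
    by (simp add: algebra_simps)
  have L: "exp (- (z - (- ln E)) / (real k + 1)) * sqrt s ^ (k+2) = exp ((p + 1) * l - (z + ln E) * (1/p))"
    unfolding pw p_def by (simp add: exp_add[symmetric] algebra_simps add_divide_distrib diff_divide_distrib)
  have R: "exp (- z / (real k + 2)) * sqrt s ^ (k+1) = exp (p * l - z * (1/(p+1)))"
    unfolding pw p_def by (simp add: exp_add[symmetric] algebra_simps add_divide_distrib diff_divide_distrib)
  show ?thesis unfolding L R using key by simp
qed



context
  fixes v :: real
  assumes v: "0 < v" "v \<le> 1"
begin

lemma pointwise:
  assumes z: "0 \<le> z" and s: "0 \<le> s" "s \<le> 1"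
    and R: "\<And>w. w \<in> {0..z} \<Longrightarrow> 0 \<le> R w \<and> R w \<le> 1 \<and> 1 - R w \<le> UB N w s"
  shows "\<exists>y\<in>{0..z}. 1 - bomber_a v y * R (z - y) \<le> WB v N z s"
proof -
  define f where "f k = sqrt s ^ k * exp (- z / (real k + 1))" for k
  define E where "E = Max (f ` {..<Suc N})"
  have fin: "finite (f ` {..<Suc N})" "f ` {..<Suc N} \<noteq> {}" by auto
  have f0: "f 0 = exp (-z)" unfolding f_def by simp
  have fnn: "0 \<le> f k" for k unfolding f_def using s by simp
  have fle1: "f k \<le> 1" for k
  proof -
    have "sqrt s ^ k \<le> 1" using s by (simp add: power_le_one)
    moreover have "exp (- z / (real k + 1)) \<le> 1" using z by simp
    ultimately show ?thesis unfolding f_def by (simp add: mult_le_one)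
  qed
  have Ege: "f k \<le> E" if "k \<le> N" for k unfolding E_def using that fin by (intro Max_ge) auto
  have Ez: "exp (-z) \<le> E" using Ege[of 0] f0 by simp
  have Epos: "0 < E" using Ez by (smt (verit) exp_gt_zero)
  have Ele1: "E \<le> 1" unfolding E_def using fin fle1 by (subst Max_le_iff) auto
  have Esum: "E \<le> (\<Sum>k<Suc N. f k)"
  proof -
    obtain k where k: "k \<in> {..<Suc N}" "E = f k" using Max_in[OF fin] unfolding E_def by auto
    have "f k \<le> (\<Sum>k<Suc N. f k)" using fnn k by (intro member_le_sum) auto
    then show ?thesis using k by simp
  qed
  define y where "y = - ln E"
  have ey: "exp (-y) = E" unfolding y_def using Epos by simp
  have y0: "0 \<le> y" unfolding y_def using Ele1 Epos by simp
  have yz: "y \<le> z" unfolding y_def using Ez Epos by (smt (verit) exp_le_cancel_iff exp_ln)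
  have yI: "y \<in> {0..z}" using y0 yz by simp
  have zy: "z - y \<in> {0..z}" using y0 yz by simp
  note Rz = R[OF zy]
  have "1 - bomber_a v y * R (z - y) \<le> v * exp (-y) + (1 - R (z - y))"
    using aR_bounds[OF v y0] Rz by auto
  also have "\<dots> \<le> v * E + UB N (z - y) s" using ey Rz by simp
  also have "\<dots> \<le> WB v N z s"
  proof -
    have "UB N (z - y) s \<le> (\<Sum>k<N. 2 * (exp (- z / (real k + 2)) * sqrt s ^ (k+1))) + 4 * sqrt s ^ (N+2)"
      unfolding UB_def
    proof (intro add_right_mono sum_mono)
      fix k assume k: "k \<in> {..<N}"
      have "f (Suc k) \<le> E" using Ege k by auto
      then have "sqrt s ^ (k+1) * exp (- z / (real k + 2)) \<le> E" unfolding f_def by (simp add: add.commute)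
      from term_le[OF s(1) Epos this]
      have "exp (- (z - y) / (real k + 1)) * sqrt s ^ (k+2) \<le> exp (- z / (real k + 2)) * sqrt s ^ (k+1)"
        unfolding y_def by simp
      then show "2 * exp (- (z - y) / (real k + 1)) * sqrt s ^ (k+2) \<le> 2 * (exp (- z / (real k + 2)) * sqrt s ^ (k+1))"
        by simp
    qed
    moreover have "v * E \<le> v * exp (-z) + (\<Sum>k<N. v * (exp (- z / (real k + 2)) * sqrt s ^ (k+1)))"
    proof -
      have "(\<Sum>k<Suc N. f k) = f 0 + (\<Sum>k<N. f (Suc k))" by (rule sum.lessThan_Suc_shift)
      also have "(\<Sum>k<N. f (Suc k)) = (\<Sum>k<N. exp (- z / (real k + 2)) * sqrt s ^ (k+1))"
        unfolding f_def by (intro sum.cong) (auto simp: add.commute mult.commute)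
      finally have "E \<le> exp (-z) + (\<Sum>k<N. exp (- z / (real k + 2)) * sqrt s ^ (k+1))" using Esum f0 by simp
      then have "v * E \<le> v * (exp (-z) + (\<Sum>k<N. exp (- z / (real k + 2)) * sqrt s ^ (k+1)))"
        using v by (intro mult_left_mono) auto
      then show ?thesis by (simp add: distrib_left sum_distrib_left)
    qed
    ultimately have "v * E + UB N (z - y) s \<le> v * exp (-z) + ((\<Sum>k<N. v * (exp (- z / (real k + 2)) * sqrt s ^ (k+1))) +
        (\<Sum>k<N. 2 * (exp (- z / (real k + 2)) * sqrt s ^ (k+1)))) + 4 * sqrt s ^ (N+2)" by simp
    also have "\<dots> = WB v N z s" unfolding WB_def sum.distrib[symmetric]
      by (simp add: algebra_simps)
    finally show ?thesis .
  qed
  finally show ?thesis using yI by blast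
qed

end


definition WBI :: "real \<Rightarrow> nat \<Rightarrow> real \<Rightarrow> real \<Rightarrow> real" where
  "WBI v N z t = v * exp (-z) * t + (\<Sum>k<N. (v + 2) * exp (- z / (real k + 2)) * (2 / (real (k+1) + 2) * sqrt t ^ (k+1+2)))
     + 4 * (2 / (real (N+2) + 2) * sqrt t ^ (N+2+2))"

lemma WB_has_integral:
  assumes t: "0 \<le> t"
  shows "(WB v N z has_integral WBI v N z t) {0..t}"
proof -
  have c: "((\<lambda>s. v * exp (-z)) has_integral v * exp (-z) * t) {0..t}"
    using has_integral_const_real[of "v * exp (-z)" 0 t] t by (simp add: mult.commute)
  have sm: "((\<lambda>s. \<Sum>k<N. (v + 2) * exp (- z / (real k + 2)) * sqrt s ^ (k+1)) has_integral
      (\<Sum>k<N. (v + 2) * exp (- z / (real k + 2)) * (2 / (real (k+1) + 2) * sqrt t ^ (k+1+2)))) {0..t}"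
    by (intro has_integral_sum has_integral_mult_right sqrtpow_has_integral t) auto
  have tl: "((\<lambda>s. 4 * sqrt s ^ (N+2)) has_integral 4 * (2 / (real (N+2) + 2) * sqrt t ^ (N+2+2))) {0..t}"
    by (intro has_integral_mult_right sqrtpow_has_integral t)
  have "((\<lambda>s. v * exp (-z) + (\<Sum>k<N. (v + 2) * exp (- z / (real k + 2)) * sqrt s ^ (k+1)) + 4 * sqrt s ^ (N+2))
     has_integral WBI v N z t) {0..t}"
    unfolding WBI_def by (intro has_integral_add c sm tl)
  then show ?thesis unfolding WB_def[abs_def] by simp
qed

lemma WBI_le_UB:
  assumes v: "0 < v" "v \<le> 1" and t: "0 \<le> t" "t \<le> 1" and N: "N = Suc n0" and z: "0 \<le> z"
  shows "WBI v N z t \<le> UB N z t"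
proof -
  have st: "0 \<le> sqrt t" "sqrt t \<le> 1" using t by auto
  have UB: "UB N z t = 2 * exp (-z) * t + (\<Sum>k<n0. 2 * exp (- z / (real k + 2)) * sqrt t ^ (k+3)) + 4 * sqrt t ^ (N+2)"
  proof -
    have "(\<Sum>k<N. 2 * exp (- z / (real k + 1)) * sqrt t ^ (k+2)) =
       2 * exp (- z / (real 0 + 1)) * sqrt t ^ (0+2) + (\<Sum>k<n0. 2 * exp (- z / (real (Suc k) + 1)) * sqrt t ^ (Suc k+2))"
      unfolding N by (rule sum.lessThan_Suc_shift)
    also have "\<dots> = 2 * exp (-z) * t + (\<Sum>k<n0. 2 * exp (- z / (real k + 2)) * sqrt t ^ (k+3))"
      using t by (simp add: add.commute numeral_eq_Suc)
    finally show ?thesis unfolding UB_def by simp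
  qed
  have WBI: "WBI v N z t = v * exp (-z) * t + (\<Sum>k<n0. (v + 2) * exp (- z / (real k + 2)) * (2 / (real k + 3) * sqrt t ^ (k+3)))
     + ((v + 2) * exp (- z / (real n0 + 2)) * (2 / (real n0 + 3) * sqrt t ^ (N+2)) + 4 * (2 / (real N + 4) * sqrt t ^ (N+4)))"
    unfolding WBI_def N by (simp add: add.commute numeral_eq_Suc add.left_commute)
  have a: "v * exp (-z) * t \<le> 2 * exp (-z) * t" using v t by (intro mult_right_mono) auto
  have b: "(\<Sum>k<n0. (v + 2) * exp (- z / (real k + 2)) * (2 / (real k + 3) * sqrt t ^ (k+3)))
       \<le> (\<Sum>k<n0. 2 * exp (- z / (real k + 2)) * sqrt t ^ (k+3))"
  proof (rule sum_mono)
    fix k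
    have "(v + 2) * (2 / (real k + 3)) \<le> 2" using v by (simp add: field_simps)
    then have "(v + 2) * (2 / (real k + 3)) * (exp (- z / (real k + 2)) * sqrt t ^ (k+3))
        \<le> 2 * (exp (- z / (real k + 2)) * sqrt t ^ (k+3))"
      using st by (intro mult_right_mono) auto
    moreover have "(v + 2) * exp (- z / (real k + 2)) * (2 / (real k + 3) * sqrt t ^ (k+3))
      = (v + 2) * (2 / (real k + 3)) * (exp (- z / (real k + 2)) * sqrt t ^ (k+3))" by (simp add: ac_simps)
    moreover have "2 * exp (- z / (real k + 2)) * sqrt t ^ (k+3) = 2 * (exp (- z / (real k + 2)) * sqrt t ^ (k+3))"
      by (simp add: algebra_simps)
    ultimately show "(v + 2) * exp (- z / (real k + 2)) * (2 / (real k + 3) * sqrt t ^ (k+3))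
       \<le> 2 * exp (- z / (real k + 2)) * sqrt t ^ (k+3)" by linarith
  qed
  have c: "(v + 2) * exp (- z / (real n0 + 2)) * (2 / (real n0 + 3) * sqrt t ^ (N+2)) + 4 * (2 / (real N + 4) * sqrt t ^ (N+4))
     \<le> 4 * sqrt t ^ (N+2)"
  proof -
    define q where "q = sqrt t ^ (N+2)"
    have q: "0 \<le> q" "sqrt t ^ (N+4) \<le> q"
    proof -
      show "0 \<le> q" unfolding q_def using st by simp
      have "N + 4 = (N+2) + 2" by simp
      then have "sqrt t ^ (N+4) = sqrt t ^ ((N+2) + 2)" by (simp only:)
      also have "\<dots> = q * sqrt t ^ 2" unfolding q_def by (rule power_add)
      also have "\<dots> \<le> q * 1" using st \<open>0 \<le> q\<close> by (intro mult_left_mono) (auto simp: power_le_one)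
      finally show "sqrt t ^ (N+4) \<le> q" by simp
    qed
    have e1: "exp (- z / (real n0 + 2)) \<le> 1" using z by simp
    have p1: "(v + 2) * (2 / (real n0 + 3)) \<le> 2" using v by (simp add: field_simps)
    have "(v + 2) * exp (- z / (real n0 + 2)) * (2 / (real n0 + 3) * q)
      = ((v + 2) * (2 / (real n0 + 3))) * (exp (- z / (real n0 + 2)) * q)" by (simp add: ac_simps)
    also have "\<dots> \<le> 2 * (1 * q)"
      using p1 e1 q v by (intro mult_mono) auto
    finally have A: "(v + 2) * exp (- z / (real n0 + 2)) * (2 / (real n0 + 3) * q) \<le> 2 * q" by simp
    have "4 * (2 / (real N + 4) * sqrt t ^ (N+4)) \<le> 4 * (1/2 * q)"
    proof -
      have "2 / (real N + 4) \<le> 1/2" by (simp add: field_simps)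
      then show ?thesis using q st by (intro mult_left_mono mult_mono) auto
    qed
    then show ?thesis using A unfolding q_def by simp
  qed
  show ?thesis unfolding WBI UB using a b c by linarith
qed

context
  fixes v :: real
  assumes v: "0 < v" "v \<le> 1"
begin

lemma Q_upper:
  assumes N: "N = Suc n0"
  shows "\<forall>z t. 0 \<le> z \<longrightarrow> 0 \<le> t \<longrightarrow> t \<le> 1 \<longrightarrow> 1 - bomber_Q v n z t \<le> UB N z t"
proof (induction n)
  case 0
  then show ?case using UB_nonneg by simp
next
  case (Suc n)
  show ?case
  proof (intro allI impI)
    fix z t :: real assume zt: "0 \<le> z" "0 \<le> t" "t \<le> 1"
    have "1 - bomber_Q v (Suc n) z t \<le> integral {0..t} (WB v N z)"
    proof (rule Q_Suc_upper[OF v zt(1,2)])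
      show "WB v N z integrable_on {0..t}" using WB_has_integral[OF zt(2)] by blast
      fix s assume s: "s \<in> {0..t}"
      have "\<exists>y\<in>{0..z}. 1 - bomber_a v y * bomber_Q v n (z - y) s \<le> WB v N z s"
        using s zt Suc.IH Qb[OF v, where n=n] by (intro pointwise[OF v zt(1)]) (auto simp del: bomber_Q.simps)
      then obtain y where y: "y \<in> {0..z}" "1 - bomber_a v y * bomber_Q v n (z - y) s \<le> WB v N z s" by blast
      have "bomber_a v y * bomber_Q v n (z - y) s \<le> bG v n z s" using Gp(4)[OF v zt(1) _ y(1)] s by auto
      then show "1 - bG v n z s \<le> WB v N z s" using y by linarith
    qed
    also have "\<dots> = WBI v N z t" using WB_has_integral[OF zt(2)] by (rule integral_unique)
    also have "\<dots> \<le> UB N z t" by (rule WBI_le_UB[OF v zt(2,3) N zt(1)])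
    finally show "1 - bomber_Q v (Suc n) z t \<le> UB N z t" .
  qed
qed

end


context
  fixes v :: real
  assumes v: "0 < v" "v \<le> 1"
begin

lemma P_le_Q: "0 \<le> z \<Longrightarrow> 0 \<le> t \<Longrightarrow> bomber_P v z t \<le> bomber_Q v n z t"
  unfolding bomber_P_def using Qb[OF v] by (intro cINF_lower bdd_belowI2[of _ 0]) (auto simp del: bomber_Q.simps)

lemma P_ge: "0 \<le> z \<Longrightarrow> 0 \<le> t \<Longrightarrow> (\<And>n. b \<le> bomber_Q v n z t) \<Longrightarrow> b \<le> bomber_P v z t"
  unfolding bomber_P_def by (intro cINF_greatest) auto

lemma Pb: "0 \<le> z \<Longrightarrow> 0 \<le> t \<Longrightarrow> 0 \<le> bomber_P v z t \<and> bomber_P v z t \<le> 1"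
  using P_le_Q[of z t 0] P_ge[of z t 0] Qb[OF v] by auto

lemma P_lower_fail:
  "\<exists>c>0. \<forall>z t. 0 \<le> z \<longrightarrow> 0 \<le> t \<longrightarrow> c * exp (-t - z / (real m + 1)) * sqrt t ^ (m+2) \<le> 1 - bomber_P v z t"
proof -
  obtain c where c: "c > 0" "\<forall>z t. 0 \<le> z \<longrightarrow> 0 \<le> t \<longrightarrow> c * exp (-t - z / (real m + 1)) * sqrt t ^ (m+2) \<le> 1 - bomber_Q v (Suc m) z t"
    using Q_lower[OF v, of m] by blast
  show ?thesis using c P_le_Q[of _ _ "Suc m"] by (intro exI[of _ c]) (auto simp del: bomber_Q.simps, fastforce)
qed

lemma P_upper_fail: "N = Suc n0 \<Longrightarrow> 0 \<le> z \<Longrightarrow> 0 \<le> t \<Longrightarrow> t \<le> 1 \<Longrightarrow> 1 - bomber_P v z t \<le> UB N z t"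
  using P_ge[of z t "1 - UB N z t"] Q_upper[OF v, of N n0] by (auto simp del: bomber_Q.simps) (smt (verit))

lemma H_ge: "0 \<le> x \<Longrightarrow> 0 \<le> t \<Longrightarrow> y \<in> {0..x} \<Longrightarrow> bomber_a v y * bomber_P v (x - y) t \<le> bomber_H v x t"
  unfolding bomber_H_def
proof (rule cSUP_upper)
  assume xt: "0 \<le> x" "0 \<le> t"
  show "bdd_above ((\<lambda>y. bomber_a v y * bomber_P v (x - y) t) ` {0..x})"
  proof (rule bdd_aboveI2[of _ _ 1])
    fix y assume "y \<in> {0..x}"
    then show "bomber_a v y * bomber_P v (x - y) t \<le> 1"
      using a_bounds[OF v, of y] Pb[of "x-y" t] xt by (auto intro: mult_le_one)
  qed
qed

lemma H_upper_fail:
  assumes N: "N = Suc n0" and x: "0 \<le> x" and t: "0 \<le> t" "t \<le> 1"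
  shows "1 - bomber_H v x t \<le> WB v N x t"
proof -
  have "\<exists>y\<in>{0..x}. 1 - bomber_a v y * bomber_P v (x - y) t \<le> WB v N x t"
    using Pb P_upper_fail[OF N] t by (intro pointwise[OF v x t]) auto
  then obtain y where y: "y \<in> {0..x}" "1 - bomber_a v y * bomber_P v (x - y) t \<le> WB v N x t" by blast
  then show ?thesis using H_ge[OF x t(1) y(1)] by linarith
qed

lemma H_le: "0 \<le> x \<Longrightarrow> (\<And>y. y \<in> {0..x} \<Longrightarrow> bomber_a v y * bomber_P v (x - y) t \<le> b) \<Longrightarrow> bomber_H v x t \<le> b"
  unfolding bomber_H_def by (intro cSUP_least) auto

lemma H_lower_fail1: "0 \<le> x \<Longrightarrow> 0 \<le> t \<Longrightarrow> v * exp (-x) \<le> 1 - bomber_H v x t"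
proof -
  assume xt: "0 \<le> x" "0 \<le> t"
  have "bomber_H v x t \<le> 1 - v * exp (-x)"
  proof (rule H_le[OF xt(1)])
    fix y assume y: "y \<in> {0..x}"
    have "v * exp (-y) \<le> 1 - bomber_a v y * bomber_P v (x - y) t"
      using aR_bounds(1)[OF v, of y "bomber_P v (x - y) t"] Pb[of "x-y" t] y xt by auto
    moreover have "v * exp (-x) \<le> v * exp (-y)" using y v by auto
    ultimately show "bomber_a v y * bomber_P v (x - y) t \<le> 1 - v * exp (-x)" by linarith
  qed
  then show ?thesis by simp
qed

lemma H_lower_fail:
  "\<exists>C>0. \<forall>x t. 0 \<le> x \<longrightarrow> 0 \<le> t \<longrightarrow> C * exp (-t - x / (real m + 2)) * sqrt t ^ (m+1) \<le> 1 - bomber_H v x t"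
proof -
  obtain c where c: "c > 0" and hc: "\<And>z t. 0 \<le> z \<Longrightarrow> 0 \<le> t \<Longrightarrow> c * exp (-t - z / (real m + 1)) * sqrt t ^ (m+2) \<le> 1 - bomber_P v z t"
    using P_lower_fail[of m] by blast
  define C where "C = exp ((ln v + (real m + 1) * ln c) / (real m + 2))"
  show ?thesis
  proof (intro exI[of _ C] conjI allI impI)
    show "0 < C" unfolding C_def by simp
    fix x t :: real assume xt: "0 \<le> x" "0 \<le> t"
    have "bomber_H v x t \<le> 1 - C * exp (-t - x / (real m + 2)) * sqrt t ^ (m+1)"
    proof (rule H_le[OF xt(1)])
      fix y assume y: "y \<in> {0..x}"
      have R: "0 \<le> bomber_P v (x - y) t" "bomber_P v (x - y) t \<le> 1" using Pb[of "x-y" t] y xt by auto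
      have "C * exp (-t - x / (real m + 2)) * sqrt t ^ (m+1) \<le> 1 - bomber_a v y * bomber_P v (x - y) t"
        unfolding C_def using gm[OF v c xt(2) _ R hc[of "x-y" t]] y xt by auto
      then show "bomber_a v y * bomber_P v (x - y) t \<le> 1 - C * exp (-t - x / (real m + 2)) * sqrt t ^ (m+1)" by simp
    qed
    then show "C * exp (-t - x / (real m + 2)) * sqrt t ^ (m+1) \<le> 1 - bomber_H v x t" by simp
  qed
qed

end


lemma real_choose2: "real (n choose 2) = real n * (real n - 1) / 2"
proof -
  have "even (n * (n - 1))" by (cases "even n") auto
  then have "real (n * (n - 1) div 2) = real (n * (n - 1)) / 2"
    by (simp add: real_of_nat_div)
  moreover have "real (n * (n - 1)) = real n * (real n - 1)"
    by (cases n) (auto simp: algebra_simps)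
  ultimately show ?thesis by (simp add: choose_two)
qed

lemma expx_mono: "0 \<le> (x::real) \<Longrightarrow> B \<le> A \<Longrightarrow> exp (-x * A) \<le> exp (-x * B)"
  by (simp add: mult_left_mono)

lemma term_bounds:
  fixes t x a \<rho> \<delta> :: real
  assumes t: "0 < t" "t < 1" and x: "0 < x" and d: "\<bar>(- ln t) / x - \<rho>\<bar> \<le> \<delta>"
  shows "exp (-x * a) * sqrt t ^ n \<le> exp (-x * (a + real n * \<rho> / 2 - real n * \<delta> / 2))"
    and "exp (-x * (a + real n * \<rho> / 2 + real n * \<delta> / 2)) \<le> exp (-x * a) * sqrt t ^ n"
proof -
  define r where "r = (- ln t) / x"
  have lt: "ln t = - (x * r)" unfolding r_def using x by simp
  have sp0: "sqrt t ^ n = exp (real n * ln (sqrt t))" using t by (simp add: exp_of_nat_mult)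
  have "ln (sqrt t) = ln t / 2" using t by (simp add: ln_sqrt)
  with sp0 have sp: "sqrt t ^ n = exp (real n * (ln t / 2))" by simp
  have eq: "exp (-x * a) * sqrt t ^ n = exp (-x * (a + real n * r / 2))"
    unfolding sp lt by (simp add: exp_add[symmetric] algebra_simps)
  have r: "\<rho> - \<delta> \<le> r" "r \<le> \<rho> + \<delta>" using d unfolding r_def by auto
  have "real n * (\<rho> - \<delta>) \<le> real n * r" using r by (intro mult_left_mono) auto
  then show "exp (-x * a) * sqrt t ^ n \<le> exp (-x * (a + real n * \<rho> / 2 - real n * \<delta> / 2))"
    unfolding eq using x by (intro expx_mono) (auto simp: algebra_simps)
  have "real n * r \<le> real n * (\<rho> + \<delta>)" using r by (intro mult_left_mono) auto
  then show "exp (-x * (a + real n * \<rho> / 2 + real n * \<delta> / 2)) \<le> exp (-x * a) * sqrt t ^ n"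
    unfolding eq using x by (intro expx_mono) (auto simp: algebra_simps)
qed

lemma absorb_up:
  fixes x :: "'a \<Rightarrow> real" and C a \<epsilon> :: real
  assumes x: "filterlim x at_top F" and e: "0 < \<epsilon>"
  shows "\<forall>\<^sub>F t in F. C * exp (- x t * a) \<le> exp (- x t * (a - \<epsilon>))"
proof -
  have "\<forall>\<^sub>F t in F. max 0 (ln (max C 1) / \<epsilon>) \<le> x t" using x filterlim_at_top by blast
  then show ?thesis
  proof (rule eventually_mono)
    fix t assume h: "max 0 (ln (max C 1) / \<epsilon>) \<le> x t"
    have "ln (max C 1) \<le> x t * \<epsilon>" using h e by (simp add: field_simps)
    then have "max C 1 \<le> exp (x t * \<epsilon>)" by (metis exp_le_cancel_iff exp_ln max.strict_coboundedI2 zero_less_one)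
    then have "C \<le> exp (x t * \<epsilon>)" by simp
    then have "C * exp (- x t * a) \<le> exp (x t * \<epsilon>) * exp (- x t * a)" by (intro mult_right_mono) auto
    also have "\<dots> = exp (- x t * (a - \<epsilon>))" by (simp add: exp_add[symmetric] algebra_simps)
    finally show "C * exp (- x t * a) \<le> exp (- x t * (a - \<epsilon>))" .
  qed
qed

lemma absorb_lo:
  fixes x :: "'a \<Rightarrow> real" and C a \<epsilon> :: real
  assumes x: "filterlim x at_top F" and e: "0 < \<epsilon>" and C: "0 < C"
  shows "\<forall>\<^sub>F t in F. exp (- x t * (a + \<epsilon>)) \<le> C * exp (- x t * a)"
proof -
  have "\<forall>\<^sub>F t in F. max 0 (- ln C / \<epsilon>) \<le> x t" using x filterlim_at_top by blast
  then show ?thesis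
  proof (rule eventually_mono)
    fix t assume h: "max 0 (- ln C / \<epsilon>) \<le> x t"
    have "- ln C \<le> x t * \<epsilon>" using h e by (simp add: field_simps)
    then have "exp (- (x t * \<epsilon>)) \<le> C" using C by (metis exp_le_cancel_iff exp_ln minus_le_iff)
    then have "exp (- (x t * \<epsilon>)) * exp (- x t * a) \<le> C * exp (- x t * a)" by (intro mult_right_mono) auto
    moreover have "exp (- (x t * \<epsilon>)) * exp (- x t * a) = exp (- x t * (a + \<epsilon>))" by (simp add: exp_add[symmetric] algebra_simps)
    ultimately show "exp (- x t * (a + \<epsilon>)) \<le> C * exp (- x t * a)" by linarith
  qed
qed

lemma rate_lim:
  fixes x f :: "'a \<Rightarrow> real" and c :: real
  assumes c: "0 < c" and x: "\<forall>\<^sub>F t in F. 0 < x t"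
    and up: "\<And>\<epsilon>. 0 < \<epsilon> \<Longrightarrow> \<forall>\<^sub>F t in F. f t \<le> exp (- x t * (c - \<epsilon>))"
    and lo: "\<And>\<epsilon>. 0 < \<epsilon> \<Longrightarrow> \<forall>\<^sub>F t in F. exp (- x t * (c + \<epsilon>)) \<le> f t"
  shows "((\<lambda>t. \<bar>ln (f t)\<bar> / x t) \<longlongrightarrow> c) F"
  unfolding tendsto_iff
proof (intro allI impI)
  fix e :: real assume e: "0 < e"
  define \<epsilon> where "\<epsilon> = min (e/2) (c/2)"
  have ep: "0 < \<epsilon>" "\<epsilon> < e" "\<epsilon> \<le> c/2" unfolding \<epsilon>_def using e c by auto
  show "\<forall>\<^sub>F t in F. dist (\<bar>ln (f t)\<bar> / x t) c < e"
    using x up[OF ep(1)] lo[OF ep(1)]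
  proof (eventually_elim)
    case (elim t)
    have fp: "0 < f t" using elim(3) by (smt (verit) exp_gt_zero)
    have l1: "ln (f t) \<le> - x t * (c - \<epsilon>)" using elim(2) fp by (metis ln_exp ln_le_cancel_iff exp_gt_zero)
    have l2: "- x t * (c + \<epsilon>) \<le> ln (f t)" using elim(3) fp by (metis ln_exp ln_le_cancel_iff exp_gt_zero)
    have "x t * (c - \<epsilon>) > 0" using elim(1) ep by simp
    then have neg: "ln (f t) < 0" using l1 by linarith
    have "c - \<epsilon> \<le> - ln (f t) / x t" using l1 elim(1) by (simp add: field_simps)
    moreover have "- ln (f t) / x t \<le> c + \<epsilon>" using l2 elim(1) by (simp add: field_simps)
    ultimately show ?case using neg ep by (simp add: dist_real_def abs_if)
  qed
qed



lemma gmin: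
  fixes \<rho> :: real and j m :: nat
  assumes j: "j \<ge> 1" and m: "m \<ge> 1" and r1: "2 / (real j * (real j + 1)) \<le> \<rho>"
    and r2: "j = 1 \<or> \<rho> < 2 / (real j * (real j - 1))"
  shows "1 / real j + \<rho> * (real j + 1) / 2 \<le> 1 / real m + \<rho> * (real m + 1) / 2"
proof -
  have J: "real j \<ge> 1" "real m \<ge> 1" using j m by auto
  have diff: "(1 / real m + \<rho> * (real m + 1) / 2) - (1 / real j + \<rho> * (real j + 1) / 2)
      = (real m - real j) * (\<rho> / 2 - 1 / (real m * real j))"
    using J by (simp add: field_simps)
  show ?thesis
  proof (cases "m \<ge> j")
    case True
    show ?thesis
    proof (cases "m = j")
      case True then show ?thesis by simp
    next
      case False
      then have mj: "real m \<ge> real j + 1" using \<open>m \<ge> j\<close> by simp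
      have "(real j + 1) * real j \<le> real m * real j" using mj J by (intro mult_right_mono) auto
      then have "real j * (real j + 1) \<le> real m * real j" by (simp add: mult.commute)
      then have "1 / (real m * real j) \<le> 1 / (real j * (real j + 1))" using J by (intro divide_left_mono) auto
      also have "\<dots> \<le> \<rho> / 2" using r1 by (simp add: field_simps)
      finally have "0 \<le> (real m - real j) * (\<rho> / 2 - 1 / (real m * real j))" using mj by simp
      then show ?thesis using diff by linarith
    qed
  next
    case False
    then have j2: "j \<noteq> 1" using m by auto
    then have r: "\<rho> < 2 / (real j * (real j - 1))" using r2 by simp
    have mj: "real m \<le> real j - 1" using False by simp
    have pos: "0 < real j * (real j - 1)" using j j2 by simp
    have "real m * real j \<le> (real j - 1) * real j" using mj J by (intro mult_right_mono) auto
    then have "1 / (real j * (real j - 1)) \<le> 1 / (real m * real j)" using J pos by (intro divide_left_mono) (auto simp: mult.commute)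
    moreover have "\<rho> / 2 < 1 / (real j * (real j - 1))" using r pos by (simp add: field_simps)
    ultimately have "\<rho> / 2 - 1 / (real m * real j) \<le> 0" by simp
    moreover have "real m - real j \<le> 0" using mj by simp
    ultimately have "0 \<le> (real m - real j) * (\<rho> / 2 - 1 / (real m * real j))" by (simp add: mult_nonpos_nonpos)
    then show ?thesis using diff by linarith
  qed
qed



context
  fixes v \<rho> :: real and j N n0 :: nat and x :: "real \<Rightarrow> real"
  assumes v: "0 < v" "v \<le> 1" and rho: "0 < \<rho>" and j1: "j \<ge> 1"
    and good: "\<And>\<delta>. 0 < \<delta> \<Longrightarrow> \<forall>\<^sub>F t in at_right 0. 0 < t \<and> t < 1 \<and> 0 < x t \<and> \<bar>(- ln t) / x t - \<rho>\<bar> \<le> \<delta>"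
    and xtop: "filterlim x at_top (at_right 0)"
    and gmn: "\<And>m. m \<ge> 1 \<Longrightarrow> 1 / real j + \<rho> * (real j + 1) / 2 \<le> 1 / real m + \<rho> * (real m + 1) / 2"
    and N: "N = Suc n0" "1 / real j + \<rho> * (real j + 1) / 2 \<le> real (N+2) * \<rho> / 2"
begin

lemma upP:
  assumes e: "0 < \<epsilon>"
  shows "\<forall>\<^sub>F t in at_right 0. 1 - bomber_P v (x t) t \<le> exp (- x t * (1 / real j + \<rho> * (real j + 1) / 2 - \<epsilon>))"
proof -
  define cP where "cP = 1 / real j + \<rho> * (real j + 1) / 2"
  define \<delta> where "\<delta> = \<epsilon> / (real N + 2)"
  have d: "0 < \<delta>" unfolding \<delta>_def using e by simp
  have dN: "(real N + 2) * \<delta> = \<epsilon>" unfolding \<delta>_def by simp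
  have ab: "\<forall>\<^sub>F t in at_right 0. real (2*N + 4) * exp (- x t * (cP - \<epsilon>/2)) \<le> exp (- x t * (cP - \<epsilon>/2 - \<epsilon>/2))"
    by (rule absorb_up[OF xtop]) (use e in simp)
  show ?thesis
    using good[OF d] ab
    unfolding cP_def[symmetric]
  proof (eventually_elim)
    case (elim t)
    then have t: "0 < t" "t < 1" and xp: "0 < x t" and dd: "\<bar>(- ln t) / x t - \<rho>\<bar> \<le> \<delta>" by auto
    define E where "E = exp (- x t * (cP - \<epsilon>/2))"
    have "1 - bomber_P v (x t) t \<le> UB N (x t) t"
      using P_upper_fail[OF v N(1)] xp t by auto
    also have "\<dots> \<le> real (2*N + 4) * E"
    proof -
      have s: "(\<Sum>k<N. 2 * exp (- x t / (real k + 1)) * sqrt t ^ (k+2)) \<le> real (card {..<N}) * (2 * E)"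
      proof (rule sum_bounded_above)
        fix k assume k: "k \<in> {..<N}"
        have "exp (- x t * (1 / (real k + 1))) * sqrt t ^ (k+2)
           \<le> exp (- x t * (1 / (real k + 1) + real (k+2) * \<rho> / 2 - real (k+2) * \<delta> / 2))"
          by (rule term_bounds(1)[OF t xp dd])
        also have "\<dots> \<le> E" unfolding E_def
        proof (rule expx_mono)
          show "0 \<le> x t" using xp by simp
          have "cP \<le> 1 / real (k+1) + \<rho> * (real (k+1) + 1) / 2" unfolding cP_def by (rule gmn) simp
          moreover have "real (k+2) * \<delta> \<le> (real N + 2) * \<delta>" using k d by (intro mult_right_mono) auto
          ultimately show "cP - \<epsilon>/2 \<le> 1 / (real k + 1) + real (k+2) * \<rho> / 2 - real (k+2) * \<delta> / 2"
            using dN by (simp add: algebra_simps add_divide_distrib)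
        qed
        finally have "exp (- x t * (1 / (real k + 1))) * sqrt t ^ (k+2) \<le> E" .
        then show "2 * exp (- x t / (real k + 1)) * sqrt t ^ (k+2) \<le> 2 * E" by simp
      qed
      have tl: "4 * sqrt t ^ (N+2) \<le> 4 * E"
      proof -
        have "exp (- x t * 0) * sqrt t ^ (N+2) \<le> exp (- x t * (0 + real (N+2) * \<rho> / 2 - real (N+2) * \<delta> / 2))"
          by (rule term_bounds(1)[OF t xp dd])
        also have "\<dots> \<le> E" unfolding E_def
          using N(2) dN xp unfolding cP_def[symmetric] by (intro expx_mono) (auto simp: algebra_simps)
        finally show ?thesis by simp
      qed
      show ?thesis unfolding UB_def using s tl by (simp add: algebra_simps)
    qed
    also have "\<dots> \<le> exp (- x t * (cP - \<epsilon>/2 - \<epsilon>/2))" using elim unfolding E_def by simp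
    finally show ?case by simp
  qed
qed

lemma loP:
  assumes e: "0 < \<epsilon>"
  shows "\<forall>\<^sub>F t in at_right 0. exp (- x t * (1 / real j + \<rho> * (real j + 1) / 2 + \<epsilon>)) \<le> 1 - bomber_P v (x t) t"
proof -
  define cP where "cP = 1 / real j + \<rho> * (real j + 1) / 2"
  obtain c where c: "c > 0" and hc: "\<And>z t. 0 \<le> z \<Longrightarrow> 0 \<le> t \<Longrightarrow> c * exp (-t - z / (real (j-1) + 1)) * sqrt t ^ (j-1+2) \<le> 1 - bomber_P v z t"
    using P_lower_fail[OF v, of "j-1"] by blast
  have jj: "real (j-1) + 1 = real j" "j - 1 + 2 = j + 1" using j1 by auto
  define \<delta> where "\<delta> = \<epsilon> / (real j + 1)"
  have d: "0 < \<delta>" unfolding \<delta>_def using e by simp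
  have dN: "real (j+1) * \<delta> = \<epsilon>"
  proof -
    have "real j + 1 \<noteq> 0" by (metis of_nat_Suc of_nat_eq_0_iff nat.distinct(1) add.commute)
    then show ?thesis unfolding \<delta>_def by (simp add: field_simps)
  qed
  have ab: "\<forall>\<^sub>F t in at_right 0. exp (- x t * (cP + \<epsilon>/2 + \<epsilon>/2)) \<le> (c * exp (-1)) * exp (- x t * (cP + \<epsilon>/2))"
    by (rule absorb_lo[OF xtop]) (use e c in simp_all)
  show ?thesis
    using good[OF d] ab unfolding cP_def[symmetric]
  proof (eventually_elim)
    case (elim t)
    then have t: "0 < t" "t < 1" and xp: "0 < x t" and dd: "\<bar>(- ln t) / x t - \<rho>\<bar> \<le> \<delta>" by auto
    have "exp (- x t * (cP + \<epsilon>/2)) = exp (- x t * (1 / real j + real (j+1) * \<rho> / 2 + real (j+1) * \<delta> / 2))"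
      unfolding cP_def using dN by (simp add: algebra_simps)
    also have "\<dots> \<le> exp (- x t * (1 / real j)) * sqrt t ^ (j+1)"
      by (rule term_bounds(2)[OF t xp dd])
    finally have A: "exp (- x t * (cP + \<epsilon>/2)) \<le> exp (- x t * (1 / real j)) * sqrt t ^ (j+1)" .
    have "exp (- x t * (cP + \<epsilon>)) \<le> (c * exp (-1)) * exp (- x t * (cP + \<epsilon>/2))" using elim by (simp add: algebra_simps)
    also have "\<dots> \<le> (c * exp (-1)) * (exp (- x t * (1 / real j)) * sqrt t ^ (j+1))"
      using A c by (intro mult_left_mono) auto
    also have "\<dots> \<le> (c * exp (-t)) * (exp (- x t * (1 / real j)) * sqrt t ^ (j+1))"
      using c t by (intro mult_right_mono mult_left_mono) auto
    also have "\<dots> = c * exp (-t - x t / (real (j-1) + 1)) * sqrt t ^ (j-1+2)"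
      unfolding jj by (simp add: exp_diff exp_minus field_simps)
    also have "\<dots> \<le> 1 - bomber_P v (x t) t" using hc[of "x t" t] xp t by simp
    finally show ?case .
  qed
qed

lemma cH_le1: "1 / real j + \<rho> * (real j - 1) / 2 \<le> 1"
proof -
  have a: "\<rho> * (real j - 1) / 2 = \<rho> * (real j + 1) / 2 - \<rho>" by (simp add: field_simps)
  show ?thesis using gmn[of 1] unfolding a by simp
qed

lemma upH:
  assumes e: "0 < \<epsilon>"
  shows "\<forall>\<^sub>F t in at_right 0. 1 - bomber_H v (x t) t \<le> exp (- x t * (1 / real j + \<rho> * (real j - 1) / 2 - \<epsilon>))"
proof -
  define cH where "cH = 1 / real j + \<rho> * (real j - 1) / 2"
  have cHP: "cH = 1 / real j + \<rho> * (real j + 1) / 2 - \<rho>" unfolding cH_def by (simp add: field_simps)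
  define \<delta> where "\<delta> = \<epsilon> / (real N + 2)"
  have d: "0 < \<delta>" unfolding \<delta>_def using e by simp
  have dN: "(real N + 2) * \<delta> = \<epsilon>" unfolding \<delta>_def by simp
  have ab: "\<forall>\<^sub>F t in at_right 0. real (3*N + 5) * exp (- x t * (cH - \<epsilon>/2)) \<le> exp (- x t * (cH - \<epsilon>/2 - \<epsilon>/2))"
    by (rule absorb_up[OF xtop]) (use e in simp)
  show ?thesis
    using good[OF d] ab unfolding cH_def[symmetric]
  proof (eventually_elim)
    case (elim t)
    then have t: "0 < t" "t < 1" and xp: "0 < x t" and dd: "\<bar>(- ln t) / x t - \<rho>\<bar> \<le> \<delta>" by auto
    define E where "E = exp (- x t * (cH - \<epsilon>/2))"
    have "1 - bomber_H v (x t) t \<le> WB v N (x t) t"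
      using H_upper_fail[OF v N(1)] xp t by auto
    also have "\<dots> \<le> real (3*N + 5) * E"
    proof -
      have h1: "v * exp (- x t) \<le> E"
      proof -
        have "exp (- x t) = exp (- x t * 1)" by simp
        also have "\<dots> \<le> E" unfolding E_def using cH_le1 e xp unfolding cH_def[symmetric]
          by (intro expx_mono) auto
        finally show ?thesis using v by (smt (verit) exp_gt_zero mult_left_le_one_le)
      qed
      have s: "(\<Sum>k<N. (v + 2) * exp (- x t / (real k + 2)) * sqrt t ^ (k+1)) \<le> real (card {..<N}) * (3 * E)"
      proof (rule sum_bounded_above)
        fix k assume k: "k \<in> {..<N}"
        have "exp (- x t * (1 / (real k + 2))) * sqrt t ^ (k+1)
           \<le> exp (- x t * (1 / (real k + 2) + real (k+1) * \<rho> / 2 - real (k+1) * \<delta> / 2))"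
          by (rule term_bounds(1)[OF t xp dd])
        also have "\<dots> \<le> E" unfolding E_def
        proof (rule expx_mono)
          show "0 \<le> x t" using xp by simp
          have "1 / real j + \<rho> * (real j + 1) / 2 \<le> 1 / real (k+2) + \<rho> * (real (k+2) + 1) / 2" by (rule gmn) simp
          moreover have "real (k+1) * \<delta> \<le> (real N + 2) * \<delta>" using k d by (intro mult_right_mono) auto
          ultimately show "cH - \<epsilon>/2 \<le> 1 / (real k + 2) + real (k+1) * \<rho> / 2 - real (k+1) * \<delta> / 2"
            using dN unfolding cHP by (simp add: algebra_simps add_divide_distrib)
        qed
        finally have A: "exp (- x t * (1 / (real k + 2))) * sqrt t ^ (k+1) \<le> E" .
        have "(v + 2) * exp (- x t / (real k + 2)) * sqrt t ^ (k+1) = (v + 2) * (exp (- x t * (1 / (real k + 2))) * sqrt t ^ (k+1))"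
          by simp
        also have "\<dots> \<le> 3 * E" using A v t by (intro mult_mono) auto
        finally show "(v + 2) * exp (- x t / (real k + 2)) * sqrt t ^ (k+1) \<le> 3 * E" .
      qed
      have tl: "4 * sqrt t ^ (N+2) \<le> 4 * E"
      proof -
        have "exp (- x t * 0) * sqrt t ^ (N+2) \<le> exp (- x t * (0 + real (N+2) * \<rho> / 2 - real (N+2) * \<delta> / 2))"
          by (rule term_bounds(1)[OF t xp dd])
        also have "\<dots> \<le> E" unfolding E_def
        proof (rule expx_mono)
          show "0 \<le> x t" using xp by simp
          have "cH \<le> real (N+2) * \<rho> / 2" using N(2) cHP rho by linarith
          moreover have "real (N+2) * \<delta> = \<epsilon>" using dN by (simp add: add.commute)
          ultimately show "cH - \<epsilon>/2 \<le> 0 + real (N+2) * \<rho> / 2 - real (N+2) * \<delta> / 2" by linarith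
        qed
        finally show ?thesis by simp
      qed
      show ?thesis unfolding WB_def using h1 s tl by (simp add: algebra_simps)
    qed
    also have "\<dots> \<le> exp (- x t * (cH - \<epsilon>/2 - \<epsilon>/2))" using elim unfolding E_def by simp
    finally show ?case by simp
  qed
qed

lemma loH:
  assumes e: "0 < \<epsilon>"
  shows "\<forall>\<^sub>F t in at_right 0. exp (- x t * (1 / real j + \<rho> * (real j - 1) / 2 + \<epsilon>)) \<le> 1 - bomber_H v (x t) t"
proof (cases "j = 1")
  case True
  have ab: "\<forall>\<^sub>F t in at_right 0. exp (- x t * (1 + \<epsilon>)) \<le> v * exp (- x t * 1)"
    by (rule absorb_lo[OF xtop e v(1)])
  show ?thesis using ab good[OF e]
  proof (eventually_elim)
    case (elim t)
    then have "v * exp (- x t) \<le> 1 - bomber_H v (x t) t" using H_lower_fail1[OF v, of "x t" t] by auto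
    then show ?case using elim True by simp
  qed
next
  case False
  then have j2: "j \<ge> 2" using j1 by simp
  define cH where "cH = 1 / real j + \<rho> * (real j - 1) / 2"
  obtain C where C: "C > 0" and hC: "\<And>z t. 0 \<le> z \<Longrightarrow> 0 \<le> t \<Longrightarrow> C * exp (-t - z / (real (j-2) + 2)) * sqrt t ^ (j-2+1) \<le> 1 - bomber_H v z t"
    using H_lower_fail[OF v, of "j-2"] by blast
  have jj: "real (j-2) + 2 = real j" "j - 2 + 1 = j - 1" "real (j-1) = real j - 1" using j2 by auto
  define \<delta> where "\<delta> = \<epsilon> / (real j + 1)"
  have d: "0 < \<delta>" unfolding \<delta>_def using e by simp
  have dN: "real (j-1) * \<delta> \<le> \<epsilon>"
  proof -
    have "real (j-1) * \<delta> \<le> (real j + 1) * \<delta>" using d by (intro mult_right_mono) auto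
    then show ?thesis unfolding \<delta>_def by simp
  qed
  have ab: "\<forall>\<^sub>F t in at_right 0. exp (- x t * (cH + \<epsilon>/2 + \<epsilon>/2)) \<le> (C * exp (-1)) * exp (- x t * (cH + \<epsilon>/2))"
    by (rule absorb_lo[OF xtop]) (use e C in simp_all)
  show ?thesis
    using good[OF d] ab unfolding cH_def[symmetric]
  proof (eventually_elim)
    case (elim t)
    then have t: "0 < t" "t < 1" and xp: "0 < x t" and dd: "\<bar>(- ln t) / x t - \<rho>\<bar> \<le> \<delta>" by auto
    have "exp (- x t * (cH + \<epsilon>/2)) \<le> exp (- x t * (1 / real j + real (j-1) * \<rho> / 2 + real (j-1) * \<delta> / 2))"
      unfolding cH_def using dN xp jj by (intro expx_mono) (auto simp: algebra_simps)
    also have "\<dots> \<le> exp (- x t * (1 / real j)) * sqrt t ^ (j-1)"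
      by (rule term_bounds(2)[OF t xp dd])
    finally have A: "exp (- x t * (cH + \<epsilon>/2)) \<le> exp (- x t * (1 / real j)) * sqrt t ^ (j-1)" .
    have "exp (- x t * (cH + \<epsilon>)) \<le> (C * exp (-1)) * exp (- x t * (cH + \<epsilon>/2))" using elim by (simp add: algebra_simps)
    also have "\<dots> \<le> (C * exp (-1)) * (exp (- x t * (1 / real j)) * sqrt t ^ (j-1))"
      using A C by (intro mult_left_mono) auto
    also have "\<dots> \<le> (C * exp (-t)) * (exp (- x t * (1 / real j)) * sqrt t ^ (j-1))"
      using C t by (intro mult_right_mono mult_left_mono) auto
    also have "\<dots> = C * exp (-t - x t / (real (j-2) + 2)) * sqrt t ^ (j-2+1)"
      unfolding jj by (simp add: exp_diff exp_minus field_simps)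
    also have "\<dots> \<le> 1 - bomber_H v (x t) t" using hC[of "x t" t] xp t by simp
    finally show ?case .
  qed
qed

lemma Klim:
  fixes K :: "real \<Rightarrow> real"
  assumes K: "\<forall>\<^sub>F t in at_right 0. 0 \<le> K t \<and> K t \<le> x t \<and>
              bomber_a v (K t) * bomber_P v (x t - K t) t = bomber_H v (x t) t"
  shows "((\<lambda>t. K t / x t) \<longlongrightarrow> 1 / real j + \<rho> * (real j - 1) / 2) (at_right 0)"
  unfolding tendsto_iff
proof (intro allI impI)
  fix e :: real assume e: "0 < e"
  define cH where "cH = 1 / real j + \<rho> * (real j - 1) / 2"
  define J where "J = real j"
  have J1: "1 \<le> J" unfolding J_def using j1 by simp
  define \<epsilon>1 where "\<epsilon>1 = e / 4"
  have e1: "0 < \<epsilon>1" unfolding \<epsilon>1_def using e by simp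
  have lower: "\<forall>\<^sub>F t in at_right 0. cH - e < K t / x t"
  proof -
    have xb: "\<forall>\<^sub>F t in at_right 0. - ln v / \<epsilon>1 \<le> x t" using xtop filterlim_at_top by blast
    show ?thesis using upH[OF e1] good[OF e1] xb K unfolding cH_def[symmetric]
    proof (eventually_elim)
      case (elim t)
      then have t: "0 < t" "t < 1" and xp: "0 < x t" and Kx: "0 \<le> K t" "K t \<le> x t"
        and eq: "bomber_a v (K t) * bomber_P v (x t - K t) t = bomber_H v (x t) t" by auto
      have R: "0 \<le> bomber_P v (x t - K t) t" "bomber_P v (x t - K t) t \<le> 1" using Pb[OF v, of "x t - K t" t] Kx t by auto
      have "v * exp (- K t) \<le> 1 - bomber_H v (x t) t" using aR_bounds(1)[OF v Kx(1) R] eq by simp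
      also have "\<dots> \<le> exp (- x t * (cH - \<epsilon>1))" using elim by simp
      finally have "v * exp (- K t) \<le> exp (- x t * (cH - \<epsilon>1))" .
      then have "ln (v * exp (- K t)) \<le> - x t * (cH - \<epsilon>1)" using v by (metis exp_gt_zero ln_exp ln_le_cancel_iff mult_pos_pos)
      then have l: "ln v - K t \<le> - x t * (cH - \<epsilon>1)" using v by (simp add: ln_mult)
      have "- ln v \<le> \<epsilon>1 * x t" using elim(3) e1 by (simp add: field_simps)
      then have "x t * (cH - 2 * \<epsilon>1) \<le> K t" using l by (simp add: algebra_simps)
      then have "cH - 2 * \<epsilon>1 \<le> K t / x t" using xp by (simp add: field_simps)
      then show ?case unfolding \<epsilon>1_def using e by simp
    qed
  qed
  have upper: "\<forall>\<^sub>F t in at_right 0. K t / x t < cH + e"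
  proof (cases "j = 1")
    case True
    show ?thesis using K good[OF e]
    proof (eventually_elim)
      case (elim t)
      then have "K t / x t \<le> 1" by (simp add: divide_le_eq_1)
      then show ?case using True e unfolding cH_def by simp
    qed
  next
    case False
    then have j2: "j \<ge> 2" using j1 by simp
    define q where "q = J - 1"
    have q1: "1 \<le> q" unfolding q_def J_def using j2 by simp
    obtain c where c: "c > 0" and hc: "\<And>z t. 0 \<le> z \<Longrightarrow> 0 \<le> t \<Longrightarrow> c * exp (-t - z / (real (j-2) + 1)) * sqrt t ^ (j-2+2) \<le> 1 - bomber_P v z t"
      using P_lower_fail[OF v, of "j-2"] by blast
    have jj: "real (j-2) + 1 = q" "j - 2 + 2 = j" unfolding q_def J_def using j2 by auto
    define \<epsilon>2 where "\<epsilon>2 = e / (4 * J)"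
    define \<delta> where "\<delta> = e / (2 * J * J)"
    have e2: "0 < \<epsilon>2" unfolding \<epsilon>2_def using e J1 by simp
    have d: "0 < \<delta>" unfolding \<delta>_def using e J1 by simp
    have xb: "\<forall>\<^sub>F t in at_right 0. - (ln c - 1) / \<epsilon>2 \<le> x t" using xtop filterlim_at_top by blast
    show ?thesis using upH[OF e2] good[OF d] xb K unfolding cH_def[symmetric]
    proof (eventually_elim)
      case (elim t)
      then have t: "0 < t" "t < 1" and xp: "0 < x t" and dd: "\<bar>(- ln t) / x t - \<rho>\<bar> \<le> \<delta>" and Kx: "0 \<le> K t" "K t \<le> x t"
        and eq: "bomber_a v (K t) * bomber_P v (x t - K t) t = bomber_H v (x t) t" by auto
      define X where "X = x t"
      define k where "k = K t"
      have Xp: "0 < X" unfolding X_def using xp .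
      have R: "0 \<le> bomber_P v (x t - K t) t" "bomber_P v (x t - K t) t \<le> 1" using Pb[OF v, of "x t - K t" t] Kx t by auto
      have "1 - bomber_P v (x t - K t) t \<le> 1 - bomber_H v (x t) t" using aR_bounds(2)[OF v Kx(1) R] eq by simp
      also have "\<dots> \<le> exp (- x t * (cH - \<epsilon>2))" using elim by simp
      finally have A: "1 - bomber_P v (x t - K t) t \<le> exp (- x t * (cH - \<epsilon>2))" .
      have B: "c * exp (-t - (x t - K t) / q) * sqrt t ^ j \<le> 1 - bomber_P v (x t - K t) t"
        using hc[of "x t - K t" t] Kx t unfolding jj by simp
      have S: "exp (- x t * (0 + real j * \<rho> / 2 + real j * \<delta> / 2)) \<le> exp (- x t * 0) * sqrt t ^ j"
        by (rule term_bounds(2)[OF t xp dd])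
      have "c * exp (-1) * exp (- (x t - K t) / q) * exp (- x t * (0 + real j * \<rho> / 2 + real j * \<delta> / 2))
          \<le> c * exp (-t) * exp (- (x t - K t) / q) * sqrt t ^ j"
        using S c t by (intro mult_mono) auto
      also have "\<dots> = c * exp (-t - (x t - K t) / q) * sqrt t ^ j"
      proof -
        have "exp (-t - (x t - K t) / q) = exp (-t) * exp (- (x t - K t) / q)"
          by (metis exp_add minus_divide_left diff_conv_add_uminus)
        then show ?thesis by simp
      qed
      finally have "c * exp (-1) * exp (- (x t - K t) / q) * exp (- x t * (0 + real j * \<rho> / 2 + real j * \<delta> / 2))
          \<le> exp (- x t * (cH - \<epsilon>2))" using A B by linarith
      moreover have "c * exp (-1) * exp (- (x t - K t) / q) * exp (- x t * (0 + real j * \<rho> / 2 + real j * \<delta> / 2))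
          = exp (ln c - 1 - (X - k) / q - X * (J * \<rho> / 2 + J * \<delta> / 2))"
      proof -
        have "ln c - 1 - (X - k) / q - X * (J * \<rho> / 2 + J * \<delta> / 2) = ln c + (-1) + (- ((X - k) / q)) + (- X * (J * \<rho> / 2 + J * \<delta> / 2))"
          by simp
        then have "exp (ln c - 1 - (X - k) / q - X * (J * \<rho> / 2 + J * \<delta> / 2))
           = exp (ln c) * exp (-1) * exp (- ((X - k) / q)) * exp (- X * (J * \<rho> / 2 + J * \<delta> / 2))"
          by (simp only: exp_add)
        also have "\<dots> = c * exp (-1) * exp (- (x t - K t) / q) * exp (- x t * (0 + real j * \<rho> / 2 + real j * \<delta> / 2))"
          unfolding X_def k_def J_def using c by (simp add: minus_divide_left)
        finally show ?thesis by simp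
      qed
      ultimately have "ln c - 1 - (X - k) / q - X * (J * \<rho> / 2 + J * \<delta> / 2) \<le> - X * (cH - \<epsilon>2)"
        unfolding X_def by simp
      moreover have "- (ln c - 1) \<le> \<epsilon>2 * X" using elim(3) e2 unfolding X_def by (simp add: field_simps)
      ultimately have C1: "X * (cH - 2 * \<epsilon>2 - J * \<rho> / 2 - J * \<delta> / 2) \<le> (X - k) / q"
        by (simp add: algebra_simps)
      have "q * (X * (cH - 2 * \<epsilon>2 - J * \<rho> / 2 - J * \<delta> / 2)) \<le> X - k"
        using C1 q1 by (simp add: field_simps)
      then have "k \<le> X * (1 - q * (cH - 2 * \<epsilon>2 - J * \<rho> / 2 - J * \<delta> / 2))"
        by (simp add: algebra_simps)
      then have C2: "k / X \<le> 1 - q * (cH - 2 * \<epsilon>2 - J * \<rho> / 2 - J * \<delta> / 2)"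
        using Xp by (simp add: field_simps)
      have id: "1 - q * (cH - J * \<rho> / 2) = cH"
        unfolding q_def cH_def J_def using J1 unfolding J_def by (simp add: field_simps)
      have "1 - q * (cH - 2 * \<epsilon>2 - J * \<rho> / 2 - J * \<delta> / 2) = cH + q * (2 * \<epsilon>2 + J * \<delta> / 2)"
        using id by (simp add: algebra_simps)
      also have "2 * \<epsilon>2 + J * \<delta> / 2 = 3 * e / (4 * J)"
        unfolding \<epsilon>2_def \<delta>_def using J1 by (simp add: field_simps)
      also have "q * (3 * e / (4 * J)) < e"
      proof -
        have "q * (3 * e / (4 * J)) = (q / J) * (3 * e / 4)" using J1 by (simp add: field_simps)
        also have "\<dots> \<le> 1 * (3 * e / 4)" using q1 J1 e unfolding q_def by (intro mult_right_mono) auto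
        finally have "q * (3 * e / (4 * J)) \<le> 3 * e / 4" by simp
        then show ?thesis using e by linarith
      qed
      finally show ?case using C2 unfolding X_def k_def by simp
    qed
  qed
  show "\<forall>\<^sub>F t in at_right 0. dist (K t / x t) (1 / real j + \<rho> * (real j - 1) / 2) < e"
    using lower upper unfolding cH_def[symmetric] by eventually_elim (simp add: dist_real_def abs_if)
qed

end


theorem theorem2:
  fixes v \<rho> :: real and j :: nat and x K :: "real \<Rightarrow> real"
  assumes v: "0 < v" "v \<le> 1"
    and xpos: "\<forall>\<^sub>F t in at_right 0. x t > 0"
    and rho: "0 < \<rho>" "((\<lambda>t. \<bar>ln t\<bar> / x t) \<longlongrightarrow> \<rho>) (at_right 0)"
    and j: "j \<ge> 1" "1 / real ((j + 1) choose 2) \<le> \<rho>"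
           "j = 1 \<or> \<rho> < 1 / real (j choose 2)"
    and K: "\<forall>\<^sub>F t in at_right 0. 0 \<le> K t \<and> K t \<le> x t \<and>
              bomber_a v (K t) * bomber_P v (x t - K t) t = bomber_H v (x t) t"
  shows "((\<lambda>t. K t / x t) \<longlongrightarrow> 1 / real j + \<rho> * (real j - 1) / 2) (at_right 0) \<and>
         ((\<lambda>t. \<bar>ln (1 - bomber_H v (x t) t)\<bar> / x t)
            \<longlongrightarrow> 1 / real j + \<rho> * (real j - 1) / 2) (at_right 0) \<and>
         ((\<lambda>t. \<bar>ln (1 - bomber_P v (x t) t)\<bar> / x t)
            \<longlongrightarrow> 1 / real j + \<rho> * (real j + 1) / 2) (at_right 0)"
proof -
  let ?F = "at_right (0::real)"
  have ev01: "\<forall>\<^sub>F t in ?F. 0 < t \<and> t < 1"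
    unfolding eventually_at_right_field by (intro exI[of _ 1]) auto
  have good: "\<forall>\<^sub>F t in ?F. 0 < t \<and> t < 1 \<and> 0 < x t \<and> \<bar>(- ln t) / x t - \<rho>\<bar> \<le> \<delta>" if d: "0 < \<delta>" for \<delta>
  proof -
    have "\<forall>\<^sub>F t in ?F. dist (\<bar>ln t\<bar> / x t) \<rho> < \<delta>" using rho(2) d unfolding tendsto_iff by blast
    then show ?thesis using ev01 xpos
    proof (eventually_elim)
      case (elim t)
      then have "\<bar>ln t\<bar> = - ln t" by simp
      then show ?case using elim by (simp add: dist_real_def)
    qed
  qed
  have xtop: "filterlim x at_top ?F"
    unfolding filterlim_at_top
  proof
    fix Z :: real
    have "\<forall>\<^sub>F t in ?F. ln t \<le> - (2 * \<rho> * max Z 0)" using ln_at_0 filterlim_at_bot by blast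
    then show "\<forall>\<^sub>F t in ?F. Z \<le> x t" using good[OF rho(1)]
    proof (eventually_elim)
      case (elim t)
      then have xp: "0 < x t" and r: "(- ln t) / x t \<le> 2 * \<rho>" by auto
      then have "- ln t \<le> 2 * \<rho> * x t" by (simp add: field_simps)
      then have "2 * \<rho> * max Z 0 \<le> 2 * \<rho> * x t" using elim(1) by linarith
      then have "max Z 0 \<le> x t" using rho(1) by simp
      then show ?case by simp
    qed
  qed
  have jr1: "2 / (real j * (real j + 1)) \<le> \<rho>"
  proof -
    have eq: "real ((j+1) choose 2) = real j * (real j + 1) / 2" using real_choose2[of "j+1"] by (simp add: algebra_simps)
    have e2: "1 / (real j * (real j + 1) / 2) = 2 / (real j * (real j + 1))" by simp
    show ?thesis using j(2) unfolding eq e2 .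
  qed
  have jr2: "j = 1 \<or> \<rho> < 2 / (real j * (real j - 1))"
    using j(3) real_choose2[of j] by (simp add: field_simps)
  define cP where "cP = 1 / real j + \<rho> * (real j + 1) / 2"
  define cH where "cH = 1 / real j + \<rho> * (real j - 1) / 2"
  have cHP: "cH = cP - \<rho>" unfolding cH_def cP_def by (simp add: field_simps)
  have gmn: "cP \<le> 1 / real m + \<rho> * (real m + 1) / 2" if "m \<ge> 1" for m
    unfolding cP_def using gmin[OF j(1) that jr1 jr2] .
  have Jp: "real j \<ge> 1" using j by simp
  have cHpos: "0 < cH" unfolding cH_def using Jp rho(1) by (intro add_pos_nonneg) auto
  have cPpos: "0 < cP" using cHpos cHP rho(1) by simp
  define n0 where "n0 = nat \<lceil>2 * cP / \<rho>\<rceil>"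
  define N where "N = Suc n0"
  have Nbig: "cP \<le> real (N+2) * \<rho> / 2"
  proof -
    have "2 * cP / \<rho> \<le> real n0" unfolding n0_def by linarith
    then have "2 * cP \<le> real n0 * \<rho>" using rho(1) by (simp add: field_simps)
    moreover have "real n0 * \<rho> \<le> real (N+2) * \<rho>" unfolding N_def using rho(1) by (intro mult_right_mono) auto
    ultimately show ?thesis by simp
  qed
  have gmn': "\<And>m. m \<ge> 1 \<Longrightarrow> 1 / real j + \<rho> * (real j + 1) / 2 \<le> 1 / real m + \<rho> * (real m + 1) / 2"
    using gmn unfolding cP_def .
  have Nb: "N = Suc n0" "1 / real j + \<rho> * (real j + 1) / 2 \<le> real (N+2) * \<rho> / 2"
    using N_def Nbig unfolding cP_def by auto
  note ctx = v rho(1) j(1) good xtop gmn' Nb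
  have L1: "((\<lambda>t. K t / x t) \<longlongrightarrow> 1 / real j + \<rho> * (real j - 1) / 2) (at_right 0)"
    by (rule Klim[OF ctx K])
  have L2: "((\<lambda>t. \<bar>ln (1 - bomber_H v (x t) t)\<bar> / x t) \<longlongrightarrow> 1 / real j + \<rho> * (real j - 1) / 2) (at_right 0)"
    by (rule rate_lim[where f="\<lambda>t. 1 - bomber_H v (x t) t", OF cHpos[unfolded cH_def] xpos upH[OF ctx] loH[OF ctx]])
  have L3: "((\<lambda>t. \<bar>ln (1 - bomber_P v (x t) t)\<bar> / x t) \<longlongrightarrow> 1 / real j + \<rho> * (real j + 1) / 2) (at_right 0)"
    by (rule rate_lim[where f="\<lambda>t. 1 - bomber_P v (x t) t", OF cPpos[unfolded cP_def] xpos upP[OF ctx] loP[OF ctx]])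
  show ?thesis using L1 L2 L3 by blast
qed

end
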